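(* Let $\mathbb{F}$ be a finite field. For every $d\in\mathbb{N}$ there exists a CMSO sentence $\mathrm{csd}_d$ over the signature $\Sigma_{\mathbb{F}}$ such that for every matrix $A$ over $\mathbb{F}$ we have $\mathcal{S}(A)\models \mathrm{csd}_d$ if and only if $\mathrm{csd}(M(A))\le d$.
   Context: $\Sigma_{\mathbb{F}}$ consists of unary relation symbols $R,C$ and binary relation symbols $\mathrm{Entry}_\alpha$ for $\alpha\in\mathbb{F}$. For a matrix $A$, the structure $\mathcal{S}(A)$ has universe the (disjoint) union of the set of rows and the set of columns of $A$, interprets $R$ as the set of rows, $C$ as the set of columns, and $\mathrm{Entry}_\alpha$ as $\{(r,c): A(r,c)=\alpha\}$. CMSO is monadic second-order logic (quantification over elements and over sets of elements, with membership $x\in X$) extended with predicates $\mathrm{mod}_{a,b}(X)$ expressing $|X|\equiv a \pmod b$. Contraction$^*$-depth: for $A$ with $m$ rows and a subspace $K\subseteq\mathbb{F}^m$, $M(A,K)$ is the matroid on the columns where a set $\{u_1,\dots,u_\ell\}$ is dependent iff $\sum\alpha_iu_i\in K$ for some $\alpha_i$ not all $0$; $\mathrm{csd}(A,K)=0$ if $M(A,K)$ has rank $0$; otherwise if $M(A,K)$ is disconnected (not every two elements lie in a common circuit), $\mathrm{csd}(A,K)=\max_C\mathrm{csd}(A_C,K)$ over connected components $C$ ($A_C$ the submatrix of columns of $C$); otherwise $\mathrm{csd}(A,K)=1+\min_{v\in\mathbb{F}^m}\mathrm{csd}(A,K+\mathrm{span}(v))$; $\mathrm{csd}(M(A))=\mathrm{csd}(A,\{0\})$.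 *)

theory Defs
  imports "Jordan_Normal_Form.Matrix"
begin

datatype 'f cmso =
    RowP nat
  | ColP nat
  | Entry 'f nat nat
  | Eq nat nat
  | Mem nat nat
  | ModP nat nat nat
  | Neg "'f cmso"
  | Conj "'f cmso" "'f cmso"
  | Ex1 nat "'f cmso"          (* exists element *)
  | Ex2 nat "'f cmso"          (* exists set of elements *)

fun fv1 :: "'f cmso \<Rightarrow> nat set" where
  "fv1 (RowP x) = {x}"
| "fv1 (ColP x) = {x}"
| "fv1 (Entry a x y) = {x, y}"
| "fv1 (Eq x y) = {x, y}"
| "fv1 (Mem x X) = {x}"
| "fv1 (ModP a b X) = {}"
| "fv1 (Neg p) = fv1 p"
| "fv1 (Conj p q) = fv1 p \<union> fv1 q"
| "fv1 (Ex1 x p) = fv1 p - {x}"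
| "fv1 (Ex2 X p) = fv1 p"

fun fv2 :: "'f cmso \<Rightarrow> nat set" where
  "fv2 (RowP x) = {}"
| "fv2 (ColP x) = {}"
| "fv2 (Entry a x y) = {}"
| "fv2 (Eq x y) = {}"
| "fv2 (Mem x X) = {X}"
| "fv2 (ModP a b X) = {X}"
| "fv2 (Neg p) = fv2 p"
| "fv2 (Conj p q) = fv2 p \<union> fv2 q"
| "fv2 (Ex1 x p) = fv2 p"
| "fv2 (Ex2 X p) = fv2 p - {X}"

definition sentence :: "'f cmso \<Rightarrow> bool" where
  "sentence p \<longleftrightarrow> fv1 p = {} \<and> fv2 p = {}"

text \<open>The structure S(A): universe = disjoint union of rows (Inl i) and columns (Inr j).\<close>

definition univ_S :: "'f mat \<Rightarrow> (nat + nat) set" where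
  "univ_S A = Inl ` {..<dim_row A} \<union> Inr ` {..<dim_col A}"

fun sat :: "'f mat \<Rightarrow> (nat \<Rightarrow> nat + nat) \<Rightarrow> (nat \<Rightarrow> (nat + nat) set) \<Rightarrow> 'f cmso \<Rightarrow> bool" where
  "sat A \<sigma> \<tau> (RowP x) \<longleftrightarrow> \<sigma> x \<in> Inl ` {..<dim_row A}"
| "sat A \<sigma> \<tau> (ColP x) \<longleftrightarrow> \<sigma> x \<in> Inr ` {..<dim_col A}"
| "sat A \<sigma> \<tau> (Entry a x y) \<longleftrightarrow>
     (\<exists>i j. \<sigma> x = Inl i \<and> \<sigma> y = Inr j \<and> i < dim_row A \<and> j < dim_col A \<and> A $$ (i, j) = a)"
| "sat A \<sigma> \<tau> (Eq x y) \<longleftrightarrow> \<sigma> x = \<sigma> y"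
| "sat A \<sigma> \<tau> (Mem x X) \<longleftrightarrow> \<sigma> x \<in> \<tau> X"
| "sat A \<sigma> \<tau> (ModP a b X) \<longleftrightarrow> card (\<tau> X) mod b = a mod b"
| "sat A \<sigma> \<tau> (Neg p) \<longleftrightarrow> \<not> sat A \<sigma> \<tau> p"
| "sat A \<sigma> \<tau> (Conj p q) \<longleftrightarrow> sat A \<sigma> \<tau> p \<and> sat A \<sigma> \<tau> q"
| "sat A \<sigma> \<tau> (Ex1 x p) \<longleftrightarrow> (\<exists>e \<in> univ_S A. sat A (\<sigma>(x := e)) \<tau> p)"
| "sat A \<sigma> \<tau> (Ex2 X p) \<longleftrightarrow> (\<exists>E. E \<subseteq> univ_S A \<and> sat A \<sigma> (\<tau>(X := E)) p)"

text \<open>Satisfaction of a sentence (free variables absent, so the initial assignment is irrelevant).\<close>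
definition models :: "'f mat \<Rightarrow> 'f cmso \<Rightarrow> bool" where
  "models A p \<longleftrightarrow> sat A (\<lambda>_. Inl 0) (\<lambda>_. {}) p"

definition is_subspace :: "nat \<Rightarrow> 'f::field vec set \<Rightarrow> bool" where
  "is_subspace m K \<longleftrightarrow> K \<subseteq> carrier_vec m \<and> 0\<^sub>v m \<in> K \<and>
     (\<forall>u\<in>K. \<forall>w\<in>K. u + w \<in> K) \<and> (\<forall>a. \<forall>u\<in>K. a \<cdot>\<^sub>v u \<in> K)"

definition add_span :: "'f::field vec set \<Rightarrow> 'f vec \<Rightarrow> 'f vec set" where
  "add_span K v = {k + a \<cdot>\<^sub>v v | k a. k \<in> K}"

definition lincomb_cols :: "'f::field mat \<Rightarrow> (nat \<Rightarrow> 'f) \<Rightarrow> nat set \<Rightarrow> 'f vec" where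
  "lincomb_cols A \<alpha> T = vec (dim_row A) (\<lambda>i. \<Sum>c\<in>T. \<alpha> c * A $$ (i, c))"

text \<open>Dependent sets of M(A,K) (ground set = column indices).\<close>
definition dependent_M :: "'f::field mat \<Rightarrow> 'f vec set \<Rightarrow> nat set \<Rightarrow> bool" where
  "dependent_M A K T \<longleftrightarrow> T \<subseteq> {..<dim_col A} \<and>
     (\<exists>\<alpha>. (\<exists>c\<in>T. \<alpha> c \<noteq> 0) \<and> lincomb_cols A \<alpha> T \<in> K)"

definition circuit_M :: "'f::field mat \<Rightarrow> 'f vec set \<Rightarrow> nat set \<Rightarrow> nat set \<Rightarrow> bool" where
  "circuit_M A K S C \<longleftrightarrow> C \<subseteq> S \<and> dependent_M A K C \<and> (\<forall>C'. C' \<subset> C \<longrightarrow> \<not> dependent_M A K C')"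

definition rank_M :: "'f::field mat \<Rightarrow> 'f vec set \<Rightarrow> nat set \<Rightarrow> nat" where
  "rank_M A K S = Max {card T | T. T \<subseteq> S \<and> \<not> dependent_M A K T}"

definition connected_M :: "'f::field mat \<Rightarrow> 'f vec set \<Rightarrow> nat set \<Rightarrow> bool" where
  "connected_M A K S \<longleftrightarrow>
     (\<forall>x\<in>S. \<forall>y\<in>S. x \<noteq> y \<longrightarrow> (\<exists>C. circuit_M A K S C \<and> x \<in> C \<and> y \<in> C))"

definition components_M :: "'f::field mat \<Rightarrow> 'f vec set \<Rightarrow> nat set \<Rightarrow> nat set set" where
  "components_M A K S =
     {{y\<in>S. x = y \<or> (\<exists>C. circuit_M A K S C \<and> x \<in> C \<and> y \<in> C)} | x. x \<in> S}"

text \<open>csd_le A K S d  means  csd(A_S, K) <= d  (least fixed point of the recursive definition).\<close>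
inductive csd_le :: "'f::field mat \<Rightarrow> 'f vec set \<Rightarrow> nat set \<Rightarrow> nat \<Rightarrow> bool" for A where
  rank0: "rank_M A K S = 0 \<Longrightarrow> csd_le A K S d"
| disconn: "rank_M A K S \<noteq> 0 \<Longrightarrow> \<not> connected_M A K S \<Longrightarrow>
     (\<And>C. C \<in> components_M A K S \<Longrightarrow> csd_le A K C d) \<Longrightarrow> csd_le A K S d"
| conn: "rank_M A K S \<noteq> 0 \<Longrightarrow> connected_M A K S \<Longrightarrow> v \<in> carrier_vec (dim_row A) \<Longrightarrow>
     csd_le A (add_span K v) S d \<Longrightarrow> csd_le A K S (Suc d)"

definition csd :: "'f::field mat \<Rightarrow> 'f vec set \<Rightarrow> nat set \<Rightarrow> nat" where
  "csd A K S = (LEAST d. csd_le A K S d)"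

definition csd_matroid :: "'f::field mat \<Rightarrow> nat" where
  "csd_matroid A = csd A {0\<^sub>v (dim_row A)} {..<dim_col A}"

end

theory Submission
  imports Defs "HOL-Library.FuncSet"
begin

definition supp :: "(nat \<Rightarrow> 'f::zero) \<Rightarrow> nat set" where "supp \<alpha> = {c. \<alpha> c \<noteq> 0}"

definition Dpz :: "(nat \<Rightarrow> 'f::field) set \<Rightarrow> nat set \<Rightarrow> bool" where
  "Dpz Z T \<longleftrightarrow> (\<exists>\<alpha>\<in>Z. supp \<alpha> \<noteq> {} \<and> supp \<alpha> \<subseteq> T)"
definition circz :: "(nat \<Rightarrow> 'f::field) set \<Rightarrow> nat set \<Rightarrow> bool" where
  "circz Z D \<longleftrightarrow> Dpz Z D \<and> (\<forall>D'. D' \<subset> D \<longrightarrow> \<not> Dpz Z D')"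

locale lz =
  fixes Z :: "(nat \<Rightarrow> 'f::field) set"
  assumes closed: "\<alpha> \<in> Z \<Longrightarrow> \<beta> \<in> Z \<Longrightarrow> (\<lambda>c. \<alpha> c - t * \<beta> c) \<in> Z"
    and fin: "\<alpha> \<in> Z \<Longrightarrow> finite (supp \<alpha>)"
begin


lemma circ_supp: assumes "circz Z D" shows "\<exists>\<alpha>\<in>Z. supp \<alpha> = D"
proof -
  obtain \<alpha> where a: "\<alpha> \<in> Z" "supp \<alpha> \<noteq> {}" "supp \<alpha> \<subseteq> D" using assms unfolding circz_def Dpz_def by blast
  have "\<not> supp \<alpha> \<subset> D"
  proof
    assume "supp \<alpha> \<subset> D"
    then have "\<not> Dpz Z (supp \<alpha>)" using assms unfolding circz_def by blast
    then show False using a unfolding Dpz_def by blast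
  qed
  then show ?thesis using a by blast
qed

lemma circ_finite: "circz Z D \<Longrightarrow> finite D"
  using circ_supp fin by blast

lemma decomp:
  assumes "\<alpha> \<in> Z" "x \<in> supp \<alpha>"
  shows "\<exists>D. circz Z D \<and> x \<in> D \<and> D \<subseteq> supp \<alpha>"
  using assms
proof (induction "card (supp \<alpha>)" arbitrary: \<alpha> rule: less_induct)
  case less
  show ?case
  proof (cases "\<exists>\<pi>\<in>Z. supp \<pi> \<noteq> {} \<and> supp \<pi> \<subset> supp \<alpha>")
    case False
    have "Dpz Z (supp \<alpha>)" unfolding Dpz_def using less.prems by blast
    moreover have "\<forall>D'. D' \<subset> supp \<alpha> \<longrightarrow> \<not> Dpz Z D'"
    proof (intro allI impI notI)
      fix D' assume "D' \<subset> supp \<alpha>" "Dpz Z D'"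
      then obtain \<pi> where "\<pi> \<in> Z" "supp \<pi> \<noteq> {}" "supp \<pi> \<subseteq> D'" unfolding Dpz_def by blast
      then show False using False \<open>D' \<subset> supp \<alpha>\<close> by blast
    qed
    ultimately have "circz Z (supp \<alpha>)" unfolding circz_def by blast
    then show ?thesis using less.prems by blast
  next
    case True
    then obtain \<pi> where p: "\<pi> \<in> Z" "supp \<pi> \<noteq> {}" "supp \<pi> \<subset> supp \<alpha>" by blast
    have fa: "finite (supp \<alpha>)" using fin less.prems by blast
    have cardlt: "card (supp \<pi>) < card (supp \<alpha>)" using psubset_card_mono[OF fa p(3)] .
    show ?thesis
    proof (cases "x \<in> supp \<pi>")
      case True
      from less.hyps[OF cardlt p(1) True] obtain D where "circz Z D" "x \<in> D" "D \<subseteq> supp \<pi>" by blast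
      then show ?thesis using p(3) by blast
    next
      case False
      obtain w where w: "w \<in> supp \<pi>" using p(2) by blast
      define \<alpha>' where "\<alpha>' = (\<lambda>c. \<alpha> c - (\<alpha> w / \<pi> w) * \<pi> c)"
      have aZ: "\<alpha>' \<in> Z" unfolding \<alpha>'_def using closed less.prems p by blast
      have pw: "\<pi> w \<noteq> 0" using w by (simp add: supp_def)
      have sub: "supp \<alpha>' \<subseteq> supp \<alpha> - {w}"
      proof
        fix c assume c: "c \<in> supp \<alpha>'"
        have "c \<in> supp \<alpha>"
        proof (rule ccontr)
          assume "c \<notin> supp \<alpha>"
          then have "\<alpha> c = 0" "\<pi> c = 0" using p(3) by (auto simp: supp_def)
          then show False using c by (simp add: supp_def \<alpha>'_def)
        qed
        moreover have "c \<noteq> w" using c pw by (auto simp: supp_def \<alpha>'_def)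
        ultimately show "c \<in> supp \<alpha> - {w}" by simp
      qed
      have xs: "x \<in> supp \<alpha>'" using False less.prems(2) by (simp add: supp_def \<alpha>'_def)
      have "w \<in> supp \<alpha>" using w p(3) by blast
      then have "card (supp \<alpha> - {w}) < card (supp \<alpha>)" by (rule card_Diff1_less[OF fa])
      then have "card (supp \<alpha>') < card (supp \<alpha>)" using card_mono[OF _ sub] fa by fastforce
      from less.hyps[OF this aZ xs] obtain D where "circz Z D" "x \<in> D" "D \<subseteq> supp \<alpha>'" by blast
      then show ?thesis using sub by blast
    qed
  qed
qed

lemma circ_not_psub: "circz Z C \<Longrightarrow> circz Z D \<Longrightarrow> \<not> D \<subset> C"
  unfolding circz_def by blast

lemma trans_circ:
  assumes "circz Z C1" "circz Z C2" "x \<in> C1" "z \<in> C2" "C1 \<inter> C2 \<noteq> {}"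
  shows "\<exists>D. circz Z D \<and> x \<in> D \<and> z \<in> D \<and> D \<subseteq> C1 \<union> C2"
  using assms
proof (induction "card (C1 \<union> C2)" arbitrary: C1 C2 x z rule: less_induct)
  case less
  show ?case
  proof (cases "z \<in> C1 \<or> x \<in> C2")
    case True then show ?thesis using less.prems by blast
  next
    case False
    then have zn: "z \<notin> C1" and xn: "x \<notin> C2" by auto
    obtain y where y: "y \<in> C1" "y \<in> C2" using less.prems(5) by blast
    obtain l where l: "l \<in> Z" "supp l = C1" using circ_supp less.prems(1) by blast
    obtain m where m: "m \<in> Z" "supp m = C2" using circ_supp less.prems(2) by blast
    define v where "v = (\<lambda>c. l c - (l y / m y) * m c)"
    have vZ: "v \<in> Z" unfolding v_def using closed l m by blast
    have ly: "l y \<noteq> 0" using l y by (auto simp: supp_def)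
    have my: "m y \<noteq> 0" using m y by (auto simp: supp_def)
    have vy: "v y = 0" using my by (simp add: v_def)
    have mx: "m x = 0" using m xn by (auto simp: supp_def)
    have lx: "l x \<noteq> 0" using l less.prems(3) by (auto simp: supp_def)
    have nx: "x \<in> supp v" using mx lx by (simp add: v_def supp_def)
    have lz: "l z = 0" using l zn by (auto simp: supp_def)
    have mz: "m z \<noteq> 0" using m less.prems(4) by (auto simp: supp_def)
    have nz: "z \<in> supp v" using lz mz ly my by (simp add: v_def supp_def)
    have nsub: "supp v \<subseteq> (C1 \<union> C2) - {y}"
    proof
      fix c assume c: "c \<in> supp v"
      have "c \<noteq> y" using c vy by (auto simp: supp_def)
      moreover have "c \<in> C1 \<union> C2"
      proof (rule ccontr)
        assume "c \<notin> C1 \<union> C2"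
        then have "l c = 0" "m c = 0" using l m by (auto simp: supp_def)
        then show False using c by (simp add: supp_def v_def)
      qed
      ultimately show "c \<in> (C1 \<union> C2) - {y}" by simp
    qed
    obtain r where r: "circz Z r" "x \<in> r" "r \<subseteq> supp v" using decomp[OF vZ nx] by blast
    obtain s where s: "circz Z s" "z \<in> s" "s \<subseteq> supp v" using decomp[OF vZ nz] by blast
    have fU: "finite (C1 \<union> C2)" using circ_finite less.prems by blast
    show ?thesis
    proof (cases "z \<in> r")
      case True then show ?thesis using r nsub by blast
    next
      case zr: False
      show ?thesis
      proof (cases "x \<in> s")
        case True then show ?thesis using s nsub by blast
      next
        case xs: False
        have "\<not> r \<subseteq> C1"
        proof
          assume "r \<subseteq> C1"
          then have "r \<subset> C1" using r(3) nsub y by blast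
          then show False using circ_not_psub less.prems(1) r(1) by blast
        qed
        then obtain w where w: "w \<in> r" "w \<notin> C1" "w \<in> C2" using r(3) nsub by blast
        have "\<not> s \<subseteq> C2"
        proof
          assume "s \<subseteq> C2"
          then have "s \<subset> C2" using s(3) nsub y by blast
          then show False using circ_not_psub less.prems(2) s(1) by blast
        qed
        then obtain w' where w': "w' \<in> s" "w' \<notin> C2" "w' \<in> C1" using s(3) nsub by blast
        show ?thesis
        proof (cases "r \<union> C2 = C1 \<union> C2")
          case False
          then have "r \<union> C2 \<subset> C1 \<union> C2" using r(3) nsub by blast
          then have "card (r \<union> C2) < card (C1 \<union> C2)" by (rule psubset_card_mono[OF fU])
          from less.hyps[OF this r(1) less.prems(2) r(2) less.prems(4)] w
          obtain D where "circz Z D" "x \<in> D" "z \<in> D" "D \<subseteq> r \<union> C2" by blast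
          then show ?thesis using r(3) nsub by blast
        next
          case rU: True
          show ?thesis
          proof (cases "C1 \<union> s = C1 \<union> C2")
            case False
            then have "C1 \<union> s \<subset> C1 \<union> C2" using s(3) nsub by blast
            then have "card (C1 \<union> s) < card (C1 \<union> C2)" by (rule psubset_card_mono[OF fU])
            from less.hyps[OF this less.prems(1) s(1) less.prems(3) s(2)] w'
            obtain D where "circz Z D" "x \<in> D" "z \<in> D" "D \<subseteq> C1 \<union> s" by blast
            then show ?thesis using s(3) nsub by blast
          next
            case sU: True
            have "w \<in> s" using sU w by blast
            have "r \<union> s \<subset> C1 \<union> C2" using r(3) s(3) nsub y by blast
            then have "card (r \<union> s) < card (C1 \<union> C2)" by (rule psubset_card_mono[OF fU])
            from less.hyps[OF this r(1) s(1) r(2) s(2)] w \<open>w \<in> s\<close>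
            obtain D where "circz Z D" "x \<in> D" "z \<in> D" "D \<subseteq> r \<union> s" by blast
            then show ?thesis using r(3) s(3) nsub by blast
          qed
        qed
      qed
    qed
  qed
qed

end


definition colv :: "'f::field mat \<Rightarrow> nat \<Rightarrow> 'f vec" where "colv A c = vec (dim_row A) (\<lambda>i. A $$ (i,c))"
definition Zof :: "'f::field mat \<Rightarrow> 'f vec set \<Rightarrow> (nat \<Rightarrow> 'f) set" where
  "Zof A K = {\<alpha>. (\<forall>c. c \<ge> dim_col A \<longrightarrow> \<alpha> c = 0) \<and> lincomb_cols A \<alpha> {..<dim_col A} \<in> K}"
definition lin_closed :: "nat \<Rightarrow> 'f::field vec set \<Rightarrow> bool" where
  "lin_closed m K \<longleftrightarrow> (\<forall>u\<in>K. \<forall>w\<in>K. \<forall>t. vec m (\<lambda>i. u$i - t * w$i) \<in> K)"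

lemma lz_Zof: assumes "lin_closed (dim_row A) K" shows "lz (Zof A K)"
proof
  fix \<alpha> \<beta> :: "nat \<Rightarrow> 'a" and t assume a: "\<alpha> \<in> Zof A K" "\<beta> \<in> Zof A K"
  have e: "(\<alpha> c - t * \<beta> c) * A $$ (i, c) = \<alpha> c * A $$ (i, c) - t * (\<beta> c * A $$ (i, c))" for c i
    by (simp add: algebra_simps)
  have s: "(\<Sum>c<dim_col A. (\<alpha> c - t * \<beta> c) * A $$ (i, c)) = (\<Sum>c<dim_col A. \<alpha> c * A $$ (i, c)) - t * (\<Sum>c<dim_col A. \<beta> c * A $$ (i, c))" for i
    by (simp only: e sum_subtractf sum_distrib_left)
  have "lincomb_cols A (\<lambda>c. \<alpha> c - t * \<beta> c) {..<dim_col A} = vec (dim_row A) (\<lambda>i. lincomb_cols A \<alpha> {..<dim_col A} $ i - t * lincomb_cols A \<beta> {..<dim_col A} $ i)"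
    unfolding lincomb_cols_def by (rule eq_vecI) (simp_all only: s index_vec dim_vec)
  moreover have "lincomb_cols A \<alpha> {..<dim_col A} \<in> K" "lincomb_cols A \<beta> {..<dim_col A} \<in> K" using a unfolding Zof_def by auto
  ultimately have "lincomb_cols A (\<lambda>c. \<alpha> c - t * \<beta> c) {..<dim_col A} \<in> K" using assms unfolding lin_closed_def by simp
  then show "(\<lambda>c. \<alpha> c - t * \<beta> c) \<in> Zof A K" using a unfolding Zof_def by auto
next
  fix \<alpha> :: "nat \<Rightarrow> 'a" assume "\<alpha> \<in> Zof A K"
  then have "\<alpha> c = 0" if "c \<ge> dim_col A" for c using that unfolding Zof_def by auto
  then have "supp \<alpha> \<subseteq> {..<dim_col A}" unfolding supp_def by (auto simp: not_less[symmetric])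
  then show "finite (supp \<alpha>)" using finite_subset by blast
qed

lemma lincomb_restrict:
  assumes "T \<subseteq> {..<dim_col A}" "\<forall>c. c \<notin> T \<longrightarrow> \<alpha> c = 0"
  shows "lincomb_cols A \<alpha> {..<dim_col A} = lincomb_cols A \<alpha> T"
proof -
  have "(\<Sum>c\<in>{..<dim_col A}. \<alpha> c * A $$ (i, c)) = (\<Sum>c\<in>T. \<alpha> c * A $$ (i, c))" for i
    by (rule sum.mono_neutral_right) (use assms in auto)
  then show ?thesis unfolding lincomb_cols_def by simp
qed

lemma dep_Zof: "dependent_M A K T \<longleftrightarrow> T \<subseteq> {..<dim_col A} \<and> Dpz (Zof A K) T"
proof
  assume "dependent_M A K T"
  then obtain \<alpha> c where a: "T \<subseteq> {..<dim_col A}" "c \<in> T" "\<alpha> c \<noteq> 0" "lincomb_cols A \<alpha> T \<in> K"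
    unfolding dependent_M_def by blast
  define \<alpha>' where "\<alpha>' = (\<lambda>c. if c \<in> T then \<alpha> c else 0)"
  have "lincomb_cols A \<alpha>' T = lincomb_cols A \<alpha> T" unfolding lincomb_cols_def \<alpha>'_def by simp
  moreover have "lincomb_cols A \<alpha>' {..<dim_col A} = lincomb_cols A \<alpha>' T"
    by (rule lincomb_restrict) (use a in \<open>auto simp: \<alpha>'_def\<close>)
  ultimately have "\<alpha>' \<in> Zof A K" using a unfolding Zof_def \<alpha>'_def by auto
  moreover have "c \<in> supp \<alpha>'" "supp \<alpha>' \<subseteq> T" using a by (auto simp: supp_def \<alpha>'_def)
  ultimately show "T \<subseteq> {..<dim_col A} \<and> Dpz (Zof A K) T" using a unfolding Dpz_def by blast
next
  assume "T \<subseteq> {..<dim_col A} \<and> Dpz (Zof A K) T"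
  then obtain \<alpha> where a: "T \<subseteq> {..<dim_col A}" "\<alpha> \<in> Zof A K" "supp \<alpha> \<noteq> {}" "supp \<alpha> \<subseteq> T"
    unfolding Dpz_def by blast
  then obtain c where c: "c \<in> T" "\<alpha> c \<noteq> 0" by (auto simp: supp_def)
  have "lincomb_cols A \<alpha> {..<dim_col A} = lincomb_cols A \<alpha> T"
    by (rule lincomb_restrict) (use a in \<open>auto simp: supp_def\<close>)
  then show "dependent_M A K T" using a c unfolding dependent_M_def Zof_def by auto
qed

lemma circuit_Zof: "S \<subseteq> {..<dim_col A} \<Longrightarrow> circuit_M A K S D \<longleftrightarrow> D \<subseteq> S \<and> circz (Zof A K) D"
  unfolding circuit_M_def circz_def dep_Zof by (meson order.trans psubset_imp_subset)

lemma circuit_M_sub: "C \<subseteq> S \<Longrightarrow> circuit_M A K C D \<longleftrightarrow> D \<subseteq> C \<and> circuit_M A K S D"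
  unfolding circuit_M_def by auto

lemma circ_trans_M:
  assumes "lin_closed (dim_row A) K" "S \<subseteq> {..<dim_col A}"
    "circuit_M A K S C1" "circuit_M A K S C2" "x \<in> C1" "z \<in> C2" "y \<in> C1" "y \<in> C2"
  shows "\<exists>D. circuit_M A K S D \<and> x \<in> D \<and> z \<in> D"
proof -
  interpret lz "Zof A K" by (rule lz_Zof[OF assms(1)])
  have c: "C1 \<subseteq> S" "circz (Zof A K) C1" "C2 \<subseteq> S" "circz (Zof A K) C2" using assms(3,4) circuit_Zof[OF assms(2)] by auto
  obtain D where D: "circz (Zof A K) D" "x \<in> D" "z \<in> D" "D \<subseteq> C1 \<union> C2"
    using trans_circ[OF c(2) c(4) assms(5,6)] assms(7,8) by blast
  have "D \<subseteq> S" using c(1,3) D(4) by blast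
  then have "circuit_M A K S D" using circuit_Zof[OF assms(2)] D(1) by simp
  then show ?thesis using D(2,3) by blast
qed

lemma comp_sub: "C \<in> components_M A K S \<Longrightarrow> C \<subseteq> S"
  unfolding components_M_def by auto

lemma comp_connected:
  assumes "lin_closed (dim_row A) K" "S \<subseteq> {..<dim_col A}" "C \<in> components_M A K S"
  shows "connected_M A K C"
proof -
  obtain x0 where x0: "x0 \<in> S" "C = {y\<in>S. x0 = y \<or> (\<exists>D. circuit_M A K S D \<and> x0 \<in> D \<and> y \<in> D)}"
    using assms(3) unfolding components_M_def by blast
  note tr = circ_trans_M[OF assms(1,2)]
  have inC: "w \<in> C" if h: "circuit_M A K S D" "y \<in> D" "w \<in> D" "y \<in> C" for D y w
  proof -
    have "w \<in> S" using h(1,3) unfolding circuit_M_def by blast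
    moreover have "x0 = w \<or> (\<exists>D. circuit_M A K S D \<and> x0 \<in> D \<and> w \<in> D)"
    proof (cases "x0 = y")
      case True then show ?thesis using h by blast
    next
      case False
      then obtain D1 where "circuit_M A K S D1" "x0 \<in> D1" "y \<in> D1" using h(4) x0(2) by blast
      then show ?thesis using tr[OF _ h(1), of D1 x0 w y] h by blast
    qed
    ultimately show ?thesis using x0(2) by blast
  qed
  show ?thesis unfolding connected_M_def
  proof (intro ballI impI)
    fix y z assume yz: "y \<in> C" "z \<in> C" "y \<noteq> z"
    have "\<exists>D. circuit_M A K S D \<and> y \<in> D \<and> z \<in> D"
    proof (cases "x0 = y")
      case True
      then show ?thesis using yz x0(2) by auto
    next
      case F1: False
      then obtain D1 where D1: "circuit_M A K S D1" "x0 \<in> D1" "y \<in> D1" using yz(1) x0(2) by blast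
      show ?thesis
      proof (cases "x0 = z")
        case True then show ?thesis using D1 by blast
      next
        case False
        then obtain D2 where D2: "circuit_M A K S D2" "x0 \<in> D2" "z \<in> D2" using yz(2) x0(2) by blast
        show ?thesis using tr[OF D1(1) D2(1) D1(3) D2(3) D1(2) D2(2)] .
      qed
    qed
    then obtain D where D: "circuit_M A K S D" "y \<in> D" "z \<in> D" by blast
    have "D \<subseteq> C" using inC[OF D(1) D(2) _ yz(1)] by blast
    then have "circuit_M A K C D" using circuit_M_sub[OF comp_sub[OF assms(3)]] D(1) by blast
    then show "\<exists>D. circuit_M A K C D \<and> y \<in> D \<and> z \<in> D" using D by blast
  qed
qed

lemma comp_neq:
  assumes "lin_closed (dim_row A) K" "S \<subseteq> {..<dim_col A}" "C \<in> components_M A K S" "\<not> connected_M A K S"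
  shows "C \<noteq> S"
proof
  assume "C = S"
  then have "connected_M A K S" using comp_connected[OF assms(1-3)] by simp
  with assms(4) show False by simp
qed

lemma dep_mono: "dependent_M A K T \<Longrightarrow> T \<subseteq> T' \<Longrightarrow> T' \<subseteq> {..<dim_col A} \<Longrightarrow> dependent_M A K T'"
proof -
  assume a: "dependent_M A K T" "T \<subseteq> T'" "T' \<subseteq> {..<dim_col A}"
  then obtain \<alpha> where "\<alpha> \<in> Zof A K" "supp \<alpha> \<noteq> {}" "supp \<alpha> \<subseteq> T" unfolding dep_Zof Dpz_def by blast
  then have "Dpz (Zof A K) T'" unfolding Dpz_def using a(2) by blast
  then show ?thesis using a(3) unfolding dep_Zof by simp
qed

lemma rank0_iff:
  assumes "S \<subseteq> {..<dim_col A}"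
  shows "rank_M A K S = 0 \<longleftrightarrow> (\<forall>c\<in>S. dependent_M A K {c})"
proof -
  let ?M = "{card T | T. T \<subseteq> S \<and> \<not> dependent_M A K T}"
  have fS: "finite S" using assms finite_subset by blast
  have fin: "finite ?M" using fS by simp
  have "\<not> dependent_M A K {}" unfolding dependent_M_def by simp
  then have z: "0 \<in> ?M" by force
  show ?thesis
  proof
    assume r: "rank_M A K S = 0"
    show "\<forall>c\<in>S. dependent_M A K {c}"
    proof (rule ccontr)
      assume "\<not> (\<forall>c\<in>S. dependent_M A K {c})"
      then obtain c where "c \<in> S" "\<not> dependent_M A K {c}" by blast
      then have "card {c} \<in> ?M" by blast
      then have "1 \<in> ?M" by simp
      then have "1 \<le> Max ?M" using fin by simp
      moreover have "Max ?M = 0" using r unfolding rank_M_def .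
      ultimately show False by simp
    qed
  next
    assume a: "\<forall>c\<in>S. dependent_M A K {c}"
    have "\<forall>k\<in>?M. k = 0"
    proof
      fix k assume "k \<in> ?M"
      then obtain T where T: "k = card T" "T \<subseteq> S" "\<not> dependent_M A K T" by blast
      have "T = {}"
      proof (rule ccontr)
        assume "T \<noteq> {}"
        then obtain c where "c \<in> T" by blast
        then have "dependent_M A K T" using dep_mono[of A K "{c}" T] a T(2) assms by blast
        then show False using T(3) by blast
      qed
      then show "k = 0" using T by simp
    qed
    moreover have "Max ?M \<in> ?M" using fin z by (intro Max_in) auto
    ultimately have "Max ?M = 0" by blast
    then show "rank_M A K S = 0" unfolding rank_M_def .
  qed
qed

definition Kof :: "nat \<Rightarrow> 'f::field vec list \<Rightarrow> 'f vec set" where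
  "Kof m vs = {vec m (\<lambda>i. \<Sum>j<length vs. \<beta>!j * vs!j $ i) | \<beta>. length \<beta> = length vs}"

lemma Kof_closed: "lin_closed m (Kof m vs)"
  unfolding lin_closed_def
proof (intro ballI allI)
  fix u w t assume "u \<in> Kof m vs" "w \<in> Kof m vs"
  then obtain bu bw where b: "length bu = length vs" "length bw = length vs"
    "u = vec m (\<lambda>i. \<Sum>j<length vs. bu!j * vs!j $ i)" "w = vec m (\<lambda>i. \<Sum>j<length vs. bw!j * vs!j $ i)"
    unfolding Kof_def by blast
  define b where "b = map (\<lambda>j. bu!j - t * bw!j) [0..<length vs]"
  have bj: "\<And>j. j \<in> {..<length vs} \<Longrightarrow> b!j * vs!j $ i = bu!j * vs!j $ i - t * (bw!j * vs!j $ i)" for i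
    by (simp add: b_def left_diff_distrib)
  have si: "(\<Sum>j<length vs. b!j * vs!j $ i) = (\<Sum>j<length vs. bu!j * vs!j $ i) - t * (\<Sum>j<length vs. bw!j * vs!j $ i)" for i
    by (simp only: sum.cong[OF refl bj] sum_subtractf sum_distrib_left)
  have "vec m (\<lambda>i. u$i - t * w$i) = vec m (\<lambda>i. \<Sum>j<length vs. b!j * vs!j $ i)"
    by (rule eq_vecI) (simp_all only: si b(3,4) index_vec dim_vec)
  moreover have "length b = length vs" by (simp add: b_def)
  ultimately show "vec m (\<lambda>i. u$i - t * w$i) \<in> Kof m vs" unfolding Kof_def by blast
qed

lemma Kof_Nil: "Kof m [] = {0\<^sub>v m}"
  unfolding Kof_def by (auto simp: zero_vec_def)

lemma sum_snoc:
  assumes "length \<beta> = length vs"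
  shows "(\<Sum>j<length (vs@[v]). (\<beta>@[a])!j * (vs@[v])!j $ i) = (\<Sum>j<length vs. \<beta>!j * vs!j $ i) + a * v $ i"
proof -
  have "(\<Sum>j<length vs. (\<beta>@[a])!j * (vs@[v])!j $ i) = (\<Sum>j<length vs. \<beta>!j * vs!j $ i)"
    by (rule sum.cong) (use assms in \<open>auto simp: nth_append\<close>)
  moreover have "(\<beta>@[a]) ! length vs = a" using assms[symmetric] by simp
  moreover have "(vs@[v]) ! length vs = v" by simp
  ultimately show ?thesis by simp
qed

lemma vec_eqI2: "x \<in> carrier_vec m \<Longrightarrow> (\<And>i. i < m \<Longrightarrow> x $ i = f i) \<Longrightarrow> x = vec m f"
  by (intro eq_vecI) auto

lemma Kof_snoc:
  assumes "v \<in> carrier_vec m"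
  shows "add_span (Kof m vs) v = Kof m (vs @ [v])"
proof
  show "add_span (Kof m vs) v \<subseteq> Kof m (vs @ [v])"
  proof
    fix x assume "x \<in> add_span (Kof m vs) v"
    then obtain \<beta> a where x: "length \<beta> = length vs" "x = vec m (\<lambda>i. \<Sum>j<length vs. \<beta>!j * vs!j $ i) + a \<cdot>\<^sub>v v"
      unfolding add_span_def Kof_def by blast
    have "x = vec m (\<lambda>i. \<Sum>j<length (vs@[v]). (\<beta>@[a])!j * (vs@[v])!j $ i)"
    proof (rule vec_eqI2)
      show "x \<in> carrier_vec m" using x(2) assms by simp
      fix i assume i: "i < m"
      have "x $ i = (\<Sum>j<length vs. \<beta>!j * vs!j $ i) + a * v $ i" using i x(2) assms by simp
      then show "x $ i = (\<Sum>j<length (vs@[v]). (\<beta>@[a])!j * (vs@[v])!j $ i)" using sum_snoc[OF x(1)] by simp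
    qed
    moreover have "length (\<beta>@[a]) = length (vs@[v])" using x by simp
    ultimately show "x \<in> Kof m (vs @ [v])" unfolding Kof_def by blast
  qed
next
  show "Kof m (vs @ [v]) \<subseteq> add_span (Kof m vs) v"
  proof
    fix x assume "x \<in> Kof m (vs @ [v])"
    then obtain \<beta> where x: "length \<beta> = Suc (length vs)" "x = vec m (\<lambda>i. \<Sum>j<length (vs@[v]). \<beta>!j * (vs@[v])!j $ i)"
      unfolding Kof_def by auto
    define \<beta>' where "\<beta>' = take (length vs) \<beta>"
    have lb: "length \<beta>' = length vs" using x(1) by (simp add: \<beta>'_def)
    have bb: "\<beta> = \<beta>' @ [\<beta> ! length vs]" unfolding \<beta>'_def using x(1)
      by (metis lessI take_Suc_conv_app_nth take_all order_refl)
    define k where "k = vec m (\<lambda>i. \<Sum>j<length vs. \<beta>'!j * vs!j $ i)"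
    have "k \<in> Kof m vs" unfolding Kof_def k_def using lb by blast
    moreover have "x = k + (\<beta> ! length vs) \<cdot>\<^sub>v v"
    proof (rule eq_vecI)
      fix i assume "i < dim_vec (k + (\<beta> ! length vs) \<cdot>\<^sub>v v)"
      then have i: "i < m" using assms by (simp add: k_def)
      have "x $ i = (\<Sum>j<length (vs@[v]). \<beta>!j * (vs@[v])!j $ i)"
        using i x(2) by simp
      also have "\<dots> = (\<Sum>j<length (vs@[v]). (\<beta>'@[\<beta> ! length vs])!j * (vs@[v])!j $ i)"
        using bb by simp
      also have "\<dots> = (\<Sum>j<length vs. \<beta>'!j * vs!j $ i) + (\<beta> ! length vs) * v $ i"
        by (rule sum_snoc[OF lb])
      finally show "x $ i = (k + (\<beta> ! length vs) \<cdot>\<^sub>v v) $ i" using i assms by (simp add: k_def)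
    next
      show "dim_vec x = dim_vec (k + (\<beta> ! length vs) \<cdot>\<^sub>v v)" using x(2) assms by (simp add: k_def)
    qed
    ultimately show "x \<in> add_span (Kof m vs) v" unfolding add_span_def by blast
  qed
qed

lemma Kof_mono: "Kof m vs \<subseteq> Kof m (vs @ [v])"
proof
  fix x assume "x \<in> Kof m vs"
  then obtain \<beta> where x: "length \<beta> = length vs" "x = vec m (\<lambda>i. \<Sum>j<length vs. \<beta>!j * vs!j $ i)"
    unfolding Kof_def by blast
  have "x = vec m (\<lambda>i. \<Sum>j<length (vs@[v]). (\<beta>@[0])!j * (vs@[v])!j $ i)"
  proof (rule vec_eqI2)
    show "x \<in> carrier_vec m" using x(2) by simp
    fix i assume i: "i < m"
    show "x $ i = (\<Sum>j<length (vs@[v]). (\<beta>@[0])!j * (vs@[v])!j $ i)"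
      using i x(2) sum_snoc[OF x(1), where v=v and a=0 and i=i] by simp
  qed
  moreover have "length (\<beta>@[0]) = length (vs@[v])" using x by simp
  ultimately show "x \<in> Kof m (vs @ [v])" unfolding Kof_def by blast
qed

lemma Kof_last: "v \<in> carrier_vec m \<Longrightarrow> v \<in> Kof m (vs @ [v])"
proof -
  assume v: "v \<in> carrier_vec m"
  have z: "(\<Sum>j<length vs. (replicate (length vs) 0)!j * vs!j $ i) = 0" for i
    by (rule sum.neutral) simp
  have "v = vec m (\<lambda>i. \<Sum>j<length (vs@[v]). (replicate (length vs) 0 @ [1])!j * (vs@[v])!j $ i)"
  proof (rule vec_eqI2)
    show "v \<in> carrier_vec m" by (rule v)
    fix i assume i: "i < m"
    show "v $ i = (\<Sum>j<length (vs@[v]). (replicate (length vs) 0 @ [1])!j * (vs@[v])!j $ i)"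
      using sum_snoc[where \<beta>="replicate (length vs) 0" and vs=vs and v=v and a=1 and i=i] z[of i] by simp
  qed
  moreover have "length (replicate (length vs) 0 @ [1]) = length (vs@[v])" by simp
  ultimately show ?thesis unfolding Kof_def by blast
qed

lemma indep_col:
  assumes "c < dim_col A" "\<not> dependent_M A K {c}"
  shows "colv A c \<notin> K"
proof
  assume "colv A c \<in> K"
  moreover have "lincomb_cols A (\<lambda>_. 1) {c} = colv A c" unfolding lincomb_cols_def colv_def by simp
  ultimately have "lincomb_cols A (\<lambda>_. 1) {c} \<in> K" by simp
  moreover have "{c} \<subseteq> {..<dim_col A}" using assms(1) by simp
  moreover have "\<exists>c'\<in>{c}. (\<lambda>_. 1::'a) c' \<noteq> 0" by simp
  ultimately have "dependent_M A K {c}" unfolding dependent_M_def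
    by (intro conjI exI[of _ "\<lambda>_. (1::'a)"])
  then show False using assms(2) by blast
qed

lemma csd_mono: "csd_le A K S d \<Longrightarrow> d \<le> d' \<Longrightarrow> csd_le A K S d'"
proof (induction arbitrary: d' rule: csd_le.induct)
  case (rank0 K S d)
  show ?case by (rule csd_le.rank0) (rule rank0.hyps)
next
  case (disconn K S d)
  show ?case
  proof (rule csd_le.disconn)
    show "rank_M A K S \<noteq> 0" by (rule disconn.hyps)
    show "\<not> connected_M A K S" by (rule disconn.hyps)
    fix C assume "C \<in> components_M A K S"
    then show "csd_le A K C d'" using disconn.IH disconn.prems by blast
  qed
next
  case (conn K S v d)
  obtain d'' where d'': "d' = Suc d''" "d \<le> d''" using conn.prems by (cases d') auto
  have "csd_le A (add_span K v) S d''" using conn.IH d''(2) by blast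
  then show ?case unfolding d''(1) by (rule csd_le.conn[OF conn.hyps(1,2,3)])
qed

lemma conn_inv:
  assumes C: "C \<subseteq> {..<dim_col A}" and cc: "connected_M A (Kof (dim_row A) vs) C"
    and h: "csd_le A (Kof (dim_row A) vs) C d"
  shows "(\<forall>c\<in>C. dependent_M A (Kof (dim_row A) vs) {c}) \<or>
    (\<exists>d' v. d = Suc d' \<and> v \<in> carrier_vec (dim_row A) \<and> csd_le A (Kof (dim_row A) (vs@[v])) C d')"
  using h
proof (cases rule: csd_le.cases)
  case rank0
  then show ?thesis using rank0_iff[OF C] by simp
next
  case disconn
  then show ?thesis using cc by simp
next
  case (conn v d')
  then show ?thesis using Kof_snoc[OF \<open>v \<in> carrier_vec (dim_row A)\<close>] by auto
qed

lemma csd_char: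
  assumes S: "S \<subseteq> {..<dim_col A}"
  shows "csd_le A (Kof (dim_row A) vs) S d \<longleftrightarrow>
    (\<forall>c\<in>S. dependent_M A (Kof (dim_row A) vs) {c}) \<or>
    (\<not> connected_M A (Kof (dim_row A) vs) S \<and> (\<forall>C\<in>components_M A (Kof (dim_row A) vs) S.
        (\<forall>c\<in>C. dependent_M A (Kof (dim_row A) vs) {c}) \<or>
        (\<exists>d' v. d = Suc d' \<and> v \<in> carrier_vec (dim_row A) \<and> csd_le A (Kof (dim_row A) (vs@[v])) C d'))) \<or>
    (connected_M A (Kof (dim_row A) vs) S \<and>
        (\<exists>d' v. d = Suc d' \<and> v \<in> carrier_vec (dim_row A) \<and> csd_le A (Kof (dim_row A) (vs@[v])) S d'))"
  (is "?L \<longleftrightarrow> ?R1 \<or> ?R2 \<or> ?R3")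
proof -
  let ?m = "dim_row A"
  let ?K = "Kof ?m vs"
  have lc: "lin_closed ?m ?K" by (rule Kof_closed)
  have compS: "C \<subseteq> {..<dim_col A}" if "C \<in> components_M A ?K S" for C
    using comp_sub[OF that] S by blast
  have compC: "connected_M A ?K C" if "C \<in> components_M A ?K S" for C
    by (rule comp_connected[OF lc S that])
  show ?thesis
  proof
    assume ?L
    then show "?R1 \<or> ?R2 \<or> ?R3"
    proof (cases rule: csd_le.cases)
      case rank0
      then show ?thesis using rank0_iff[OF S] by simp
    next
      case disconn
      have ?R2
      proof (intro conjI ballI)
        show "\<not> connected_M A ?K S" using disconn by simp
        fix C assume C: "C \<in> components_M A ?K S"
        have "csd_le A ?K C d" using disconn(3) C by blast
        then show "(\<forall>c\<in>C. dependent_M A ?K {c}) \<or>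
          (\<exists>d' v. d = Suc d' \<and> v \<in> carrier_vec ?m \<and> csd_le A (Kof ?m (vs@[v])) C d')"
          by (rule conn_inv[OF compS[OF C] compC[OF C]])
      qed
      then show ?thesis by simp
    next
      case (conn v d')
      then show ?thesis using Kof_snoc[OF \<open>v \<in> carrier_vec (dim_row A)\<close>] by auto
    qed
  next
    assume "?R1 \<or> ?R2 \<or> ?R3"
    then show ?L
    proof (elim disjE)
      assume ?R1
      then show ?L using rank0_iff[OF S] by (simp add: csd_le.rank0)
    next
      assume R: ?R2
      show ?L
      proof (cases "rank_M A ?K S = 0")
        case True then show ?thesis by (rule csd_le.rank0)
      next
        case False
        show ?thesis
        proof (rule csd_le.disconn[OF False])
          show "\<not> connected_M A ?K S" using R by simp
          fix C assume C: "C \<in> components_M A ?K S"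
          then have D: "(\<forall>c\<in>C. dependent_M A ?K {c}) \<or>
            (\<exists>d' v. d = Suc d' \<and> v \<in> carrier_vec ?m \<and> csd_le A (Kof ?m (vs@[v])) C d')" using R by blast
          show "csd_le A ?K C d"
          proof (cases "rank_M A ?K C = 0")
            case True then show ?thesis by (rule csd_le.rank0)
          next
            case rC: False
            then have "\<not> (\<forall>c\<in>C. dependent_M A ?K {c})" using rank0_iff[OF compS[OF C]] by simp
            then obtain d' v where dv: "d = Suc d'" "v \<in> carrier_vec ?m" "csd_le A (Kof ?m (vs@[v])) C d'"
              using D by blast
            have "csd_le A (add_span ?K v) C d'" using dv(3) Kof_snoc[OF dv(2)] by simp
            then show ?thesis unfolding dv(1) by (rule csd_le.conn[OF rC compC[OF C] dv(2)])
          qed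
        qed
      qed
    next
      assume R: ?R3
      show ?L
      proof (cases "rank_M A ?K S = 0")
        case True then show ?thesis by (rule csd_le.rank0)
      next
        case False
        obtain d' v where dv: "d = Suc d'" "v \<in> carrier_vec ?m" "csd_le A (Kof ?m (vs@[v])) S d'"
          using R by blast
        have "csd_le A (add_span ?K v) S d'" using dv(3) Kof_snoc[OF dv(2)] by simp
        then show ?thesis unfolding dv(1) using R by (intro csd_le.conn[OF False _ dv(2)]) simp_all
      qed
    qed
  qed
qed

lemma csd_exists:
  assumes "S \<subseteq> {..<dim_col A}"
  shows "csd_le A (Kof (dim_row A) vs) S (card {c\<in>S. colv A c \<notin> Kof (dim_row A) vs})"
  using assms
proof (induction "card S + card {c\<in>S. colv A c \<notin> Kof (dim_row A) vs}" arbitrary: S vs rule: less_induct)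
  case less
  let ?m = "dim_row A"
  let ?K = "Kof ?m vs"
  let ?X = "{c\<in>S. colv A c \<notin> ?K}"
  have fS: "finite S" using less.prems finite_subset by blast
  have fX: "finite ?X" using fS by simp
  show ?case
  proof (cases "rank_M A ?K S = 0")
    case True then show ?thesis by (rule csd_le.rank0)
  next
    case r: False
    then have "\<not> (\<forall>c\<in>S. dependent_M A ?K {c})" using rank0_iff[OF less.prems, where K="?K"] by simp
    then obtain c where c: "c \<in> S" "\<not> dependent_M A ?K {c}" by blast
    have cK: "colv A c \<notin> ?K" using indep_col[of c A ?K] c less.prems by blast
    then have cX: "c \<in> ?X" using c by simp
    show ?thesis
    proof (cases "connected_M A ?K S")
      case True
      define v where "v = colv A c"
      have vc: "v \<in> carrier_vec ?m" by (simp add: v_def colv_def)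
      let ?K' = "Kof ?m (vs@[v])"
      let ?X' = "{c'\<in>S. colv A c' \<notin> ?K'}"
      have sub: "?X' \<subseteq> ?X - {c}" using Kof_mono[of ?m vs v] Kof_last[OF vc, of vs] v_def by auto
      have "card (?X - {c}) < card ?X" using fX cX by (rule card_Diff1_less)
      then have lt: "card ?X' < card ?X" using card_mono[OF _ sub] fX by fastforce
      have IH: "csd_le A ?K' S (card ?X')"
        using less.hyps[of S "vs@[v]"] lt less.prems by simp
      have "csd_le A ?K' S (card ?X - 1)" by (rule csd_mono[OF IH]) (use lt in simp)
      then have "csd_le A (add_span ?K v) S (card ?X - 1)" using Kof_snoc[OF vc] by simp
      then have "csd_le A ?K S (Suc (card ?X - 1))" by (rule csd_le.conn[OF r True vc])
      moreover have "Suc (card ?X - 1) = card ?X" using lt by simp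
      ultimately show ?thesis by simp
    next
      case nc: False
      show ?thesis
      proof (rule csd_le.disconn[OF r nc])
        fix C assume C: "C \<in> components_M A ?K S"
        have CS: "C \<subseteq> S" by (rule comp_sub[OF C])
        have CneS: "C \<noteq> S" by (rule comp_neq[OF Kof_closed less.prems C nc])
        have "card C < card S" using fS CS CneS by (meson psubsetI psubset_card_mono)
        moreover have fle: "card {c\<in>C. colv A c \<notin> ?K} \<le> card ?X"
          using fX CS by (intro card_mono) auto
        ultimately have "card C + card {c\<in>C. colv A c \<notin> ?K} < card S + card ?X" by simp
        moreover have "C \<subseteq> {..<dim_col A}" using CS less.prems by blast
        ultimately have "csd_le A ?K C (card {c\<in>C. colv A c \<notin> ?K})" using less.hyps by blast
        then show "csd_le A ?K C (card ?X)" using csd_mono fle by blast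
      qed
    qed
  qed
qed

lemma csd_matroid_iff: "csd_matroid A \<le> d \<longleftrightarrow> csd_le A {0\<^sub>v (dim_row A)} {..<dim_col A} d"
proof -
  let ?P = "\<lambda>d. csd_le A {0\<^sub>v (dim_row A)} {..<dim_col A} d"
  have "\<exists>d0. ?P d0"
    using csd_exists[of "{..<dim_col A}" A "[]"] by (auto simp: Kof_Nil)
  then obtain d0 where "?P d0" by blast
  then have P: "?P (LEAST d. ?P d)" by (rule LeastI)
  show ?thesis unfolding csd_matroid_def csd_def
  proof
    assume "(LEAST d. ?P d) \<le> d" then show "?P d" by (rule csd_mono[OF P])
  next
    assume "?P d" then show "(LEAST d. ?P d) \<le> d" by (rule Least_le)
  qed
qed

definition cOr where "cOr p q = Neg (Conj (Neg p) (Neg q))"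
definition cImp where "cImp p q = Neg (Conj p (Neg q))"
definition cIff where "cIff p q = Conj (cImp p q) (cImp q p)"
definition cAll1 where "cAll1 x p = Neg (Ex1 x (Neg p))"
definition cAll2 where "cAll2 X p = Neg (Ex2 X (Neg p))"
definition cTT where "cTT = cAll1 0 (Eq 0 0)"
definition cFF where "cFF = Neg cTT"
fun bigOr where "bigOr [] = cFF" | "bigOr (p#ps) = cOr p (bigOr ps)"
fun bigAnd where "bigAnd [] = cTT" | "bigAnd (p#ps) = Conj p (bigAnd ps)"
definition lst :: "'a set \<Rightarrow> 'a list" where "lst S = (SOME xs. set xs = S)"
definition OrS where "OrS S f = bigOr (map f (lst S))"
definition AndS where "AndS S f = bigAnd (map f (lst S))"

lemma set_lst: "finite S \<Longrightarrow> set (lst S) = S"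
proof -
  assume "finite S"
  then have "\<exists>xs. set xs = S" by (rule finite_list)
  then show ?thesis unfolding lst_def by (rule someI_ex)
qed

lemma sat_cOr[simp]: "sat A \<sigma> \<tau> (cOr p q) \<longleftrightarrow> sat A \<sigma> \<tau> p \<or> sat A \<sigma> \<tau> q"
  by (simp add: cOr_def)
lemma sat_cImp[simp]: "sat A \<sigma> \<tau> (cImp p q) \<longleftrightarrow> (sat A \<sigma> \<tau> p \<longrightarrow> sat A \<sigma> \<tau> q)"
  by (simp add: cImp_def)
lemma sat_cIff[simp]: "sat A \<sigma> \<tau> (cIff p q) \<longleftrightarrow> (sat A \<sigma> \<tau> p \<longleftrightarrow> sat A \<sigma> \<tau> q)"
  by (auto simp add: cIff_def)
lemma sat_cAll1[simp]: "sat A \<sigma> \<tau> (cAll1 x p) \<longleftrightarrow> (\<forall>e\<in>univ_S A. sat A (\<sigma>(x:=e)) \<tau> p)"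
  by (simp add: cAll1_def)
lemma sat_cAll2[simp]: "sat A \<sigma> \<tau> (cAll2 X p) \<longleftrightarrow> (\<forall>E. E \<subseteq> univ_S A \<longrightarrow> sat A \<sigma> (\<tau>(X:=E)) p)"
  by (simp add: cAll2_def)
lemma sat_cTT[simp]: "sat A \<sigma> \<tau> cTT"
  by (simp add: cTT_def)
lemma sat_cFF[simp]: "\<not> sat A \<sigma> \<tau> cFF"
  by (simp add: cFF_def)

lemma sat_bigOr[simp]: "sat A \<sigma> \<tau> (bigOr ps) \<longleftrightarrow> (\<exists>p\<in>set ps. sat A \<sigma> \<tau> p)"
  by (induction ps) auto
lemma sat_bigAnd[simp]: "sat A \<sigma> \<tau> (bigAnd ps) \<longleftrightarrow> (\<forall>p\<in>set ps. sat A \<sigma> \<tau> p)"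
  by (induction ps) auto
lemma sat_OrS[simp]: "finite S \<Longrightarrow> sat A \<sigma> \<tau> (OrS S f) \<longleftrightarrow> (\<exists>s\<in>S. sat A \<sigma> \<tau> (f s))"
  by (simp add: OrS_def set_lst)
lemma sat_AndS[simp]: "finite S \<Longrightarrow> sat A \<sigma> \<tau> (AndS S f) \<longleftrightarrow> (\<forall>s\<in>S. sat A \<sigma> \<tau> (f s))"
  by (simp add: AndS_def set_lst)

lemma sat_foldr_Ex2:
  "sat A \<sigma> \<tau> (foldr Ex2 xs \<phi>) \<longleftrightarrow>
   (\<exists>\<tau>'. (\<forall>X. X \<notin> set xs \<longrightarrow> \<tau>' X = \<tau> X) \<and> (\<forall>X\<in>set xs. \<tau>' X \<subseteq> univ_S A) \<and> sat A \<sigma> \<tau>' \<phi>)"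
proof (induction xs arbitrary: \<tau>)
  case Nil
  show ?case
  proof
    assume "sat A \<sigma> \<tau> (foldr Ex2 [] \<phi>)"
    then show "\<exists>\<tau>'. (\<forall>X. X \<notin> set [] \<longrightarrow> \<tau>' X = \<tau> X) \<and> (\<forall>X\<in>set []. \<tau>' X \<subseteq> univ_S A) \<and> sat A \<sigma> \<tau>' \<phi>"
      by (intro exI[of _ \<tau>]) simp
  next
    assume "\<exists>\<tau>'. (\<forall>X. X \<notin> set [] \<longrightarrow> \<tau>' X = \<tau> X) \<and> (\<forall>X\<in>set []. \<tau>' X \<subseteq> univ_S A) \<and> sat A \<sigma> \<tau>' \<phi>"
    then obtain \<tau>' where "\<forall>X. \<tau>' X = \<tau> X" "sat A \<sigma> \<tau>' \<phi>" by auto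
    moreover from this(1) have "\<tau>' = \<tau>" by (simp add: fun_eq_iff)
    ultimately show "sat A \<sigma> \<tau> (foldr Ex2 [] \<phi>)" by simp
  qed
next
  case (Cons x xs)
  show ?case
  proof
    assume "sat A \<sigma> \<tau> (foldr Ex2 (x # xs) \<phi>)"
    then obtain E where E: "E \<subseteq> univ_S A" "sat A \<sigma> (\<tau>(x:=E)) (foldr Ex2 xs \<phi>)" by auto
    from Cons.IH[of "\<tau>(x:=E)"] E(2) obtain \<tau>' where t: "\<forall>X. X \<notin> set xs \<longrightarrow> \<tau>' X = (\<tau>(x:=E)) X" "\<forall>X\<in>set xs. \<tau>' X \<subseteq> univ_S A" "sat A \<sigma> \<tau>' \<phi>"
      by blast
    have 1: "\<forall>X. X \<notin> set (x#xs) \<longrightarrow> \<tau>' X = \<tau> X"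
    proof (intro allI impI)
      fix X assume "X \<notin> set (x#xs)"
      then have "X \<notin> set xs" "X \<noteq> x" by auto
      then show "\<tau>' X = \<tau> X" using t(1) by auto
    qed
    have 2: "\<forall>X\<in>set (x#xs). \<tau>' X \<subseteq> univ_S A"
    proof
      fix X assume X: "X \<in> set (x#xs)"
      show "\<tau>' X \<subseteq> univ_S A"
      proof (cases "X \<in> set xs")
        case True then show ?thesis using t(2) by blast
      next
        case False then have "X = x" using X by simp
        then have "\<tau>' X = E" using t(1) False by auto
        then show ?thesis using E(1) by simp
      qed
    qed
    show "\<exists>\<tau>'. (\<forall>X. X \<notin> set (x#xs) \<longrightarrow> \<tau>' X = \<tau> X) \<and> (\<forall>X\<in>set (x#xs). \<tau>' X \<subseteq> univ_S A) \<and> sat A \<sigma> \<tau>' \<phi>"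
      using 1 2 t(3) by (intro exI[of _ \<tau>']) simp
  next
    assume "\<exists>\<tau>'. (\<forall>X. X \<notin> set (x#xs) \<longrightarrow> \<tau>' X = \<tau> X) \<and> (\<forall>X\<in>set (x#xs). \<tau>' X \<subseteq> univ_S A) \<and> sat A \<sigma> \<tau>' \<phi>"
    then obtain \<tau>' where t: "\<forall>X. X \<notin> set (x#xs) \<longrightarrow> \<tau>' X = \<tau> X" "\<forall>X\<in>set (x#xs). \<tau>' X \<subseteq> univ_S A" "sat A \<sigma> \<tau>' \<phi>" by blast
    have a: "\<forall>X. X \<notin> set xs \<longrightarrow> \<tau>' X = (\<tau>(x:=\<tau>' x)) X"
    proof (intro allI impI)
      fix X assume "X \<notin> set xs"
      then show "\<tau>' X = (\<tau>(x:=\<tau>' x)) X" using t(1) by (cases "X = x") auto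
    qed
    have b: "\<forall>X\<in>set xs. \<tau>' X \<subseteq> univ_S A" using t(2) by simp
    have "\<exists>\<tau>''. (\<forall>X. X \<notin> set xs \<longrightarrow> \<tau>'' X = (\<tau>(x:=\<tau>' x)) X) \<and> (\<forall>X\<in>set xs. \<tau>'' X \<subseteq> univ_S A) \<and> sat A \<sigma> \<tau>'' \<phi>"
      using a b t(3) by (intro exI[of _ \<tau>']) simp
    then have "sat A \<sigma> (\<tau>(x:=\<tau>' x)) (foldr Ex2 xs \<phi>)"
      by (rule iffD2[OF Cons.IH])
    moreover have "\<tau>' x \<subseteq> univ_S A" using t(2) by simp
    ultimately show "sat A \<sigma> \<tau> (foldr Ex2 (x # xs) \<phi>)" by auto
  qed
qed

lemma exists_char: "\<exists>p::nat. p > 0 \<and> of_nat p = (0::'f::{ring_1,finite})"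
proof -
  have "\<not> inj (of_nat :: nat \<Rightarrow> 'f)"
  proof
    assume "inj (of_nat :: nat \<Rightarrow> 'f)"
    then have "finite (UNIV :: nat set)" using finite_imageD[of "of_nat :: nat \<Rightarrow> 'f" UNIV] by auto
    then show False by simp
  qed
  then obtain a b where ab: "a \<noteq> b" "(of_nat a :: 'f) = of_nat b" unfolding inj_def by auto
  have key: "\<exists>p::nat. p > 0 \<and> of_nat p = (0::'f)" if "a < b" "(of_nat a :: 'f) = of_nat b" for a b
  proof -
    have "(of_nat (b - a) :: 'f) = of_nat b - of_nat a" using that(1) by (intro of_nat_diff) simp
    also have "\<dots> = 0" using that(2) by simp
    finally show ?thesis using that(1) by (intro exI[of _ "b - a"]) simp
  qed
  show ?thesis
  proof (cases "a < b")
    case True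
    then show ?thesis using ab key by blast
  next
    case False
    then have "b < a" using ab(1) by simp
    then show ?thesis using ab(2) key[of b a] by simp
  qed
qed


definition colset :: "(nat + nat) set \<Rightarrow> nat set" where "colset E = {j. Inr j \<in> E}"

lemma colset_Inr[simp]: "colset (Inr ` C) = C"
  unfolding colset_def by auto

lemma Inr_colset: "E \<subseteq> Inr ` X \<Longrightarrow> Inr ` colset E = E"
  unfolding colset_def by auto

lemma colset_sub: "E \<subseteq> Inr ` X \<Longrightarrow> colset E \<subseteq> X"
  unfolding colset_def by auto

lemma Inr_univ: "Inr ` {..<dim_col A} \<subseteq> univ_S A"
  unfolding univ_S_def by auto

lemma Inl_univ: "Inl ` {..<dim_row A} \<subseteq> univ_S A"
  unfolding univ_S_def by auto

definition encv :: "'f mat \<Rightarrow> (nat \<Rightarrow> (nat + nat) set) \<Rightarrow> ('f \<Rightarrow> nat) \<Rightarrow> 'f vec \<Rightarrow> bool" where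
  "encv A \<tau> V v \<longleftrightarrow> (\<forall>i<dim_row A. \<forall>\<gamma>. (Inl i \<in> \<tau> (V \<gamma>)) = (v $ i = \<gamma>))"

definition encs :: "'f mat \<Rightarrow> (nat \<Rightarrow> (nat + nat) set) \<Rightarrow> ('f \<Rightarrow> nat) list \<Rightarrow> 'f vec list \<Rightarrow> bool" where
  "encs A \<tau> Vs vs \<longleftrightarrow> length Vs = length vs \<and>
     (\<forall>j<length vs. encv A \<tau> (Vs!j) (vs!j) \<and> vs!j \<in> carrier_vec (dim_row A))"

definition vb :: "('f \<Rightarrow> nat) list \<Rightarrow> nat \<Rightarrow> bool" where
  "vb Vs n \<longleftrightarrow> (\<forall>j<length Vs. \<forall>\<gamma>. (Vs!j) \<gamma> < n)"

lemma vb_mono: "vb Vs n \<Longrightarrow> n \<le> n' \<Longrightarrow> vb Vs n'"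
  unfolding vb_def by (meson less_le_trans)

lemma encs_frame:
  assumes "vb Vs n" "\<And>X. X < n \<Longrightarrow> \<tau>' X = \<tau> X"
  shows "encs A \<tau>' Vs vs \<longleftrightarrow> encs A \<tau> Vs vs"
proof -
  have "encv A \<tau>' (Vs!j) v \<longleftrightarrow> encv A \<tau> (Vs!j) v" if "j < length Vs" for j v
    using assms that unfolding encv_def vb_def by auto
  then show ?thesis unfolding encs_def by auto
qed

lemma finite_lists_len: "finite {w :: ('f::finite) list. length w = k}"
  using finite_lists_length_eq[of "UNIV :: 'f set" k] by simp

lemma of_nat_mod_char: "of_nat p = (0::'f::comm_ring_1) \<Longrightarrow> of_nat (N mod p) = (of_nat N :: 'f)"
proof -
  assume p: "of_nat p = (0::'f)"
  have "(of_nat N :: 'f) = of_nat (N div p * p + N mod p)" by (simp only: div_mult_mod_eq)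
  also have "\<dots> = of_nat (N div p) * of_nat p + of_nat (N mod p)" by (simp only: of_nat_add of_nat_mult)
  finally show ?thesis using p by simp
qed

locale fx =
  fixes p :: nat and ix :: "'f::{field,finite} \<Rightarrow> nat"
  assumes p_pos: "p > 0" and p_char: "of_nat p = (0::'f)"
    and ix_bij: "bij_betw ix UNIV {..<card (UNIV :: 'f set)}"
begin

definition vmap :: "nat \<Rightarrow> 'f \<Rightarrow> nat" where "vmap n \<gamma> = n + ix \<gamma>"

lemma ix_lt: "ix \<gamma> < card (UNIV :: 'f set)"
  using ix_bij unfolding bij_betw_def by auto

lemma ix_inj: "ix a = ix b \<longleftrightarrow> a = b"
  using ix_bij unfolding bij_betw_def inj_on_def by auto

lemma vmap_ge[simp]: "n \<le> vmap n \<gamma>" by (simp add: vmap_def)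
lemma vmap_lt[simp]: "vmap n \<gamma> < n + card (UNIV :: 'f set)" using ix_lt by (simp add: vmap_def)
lemma vmap_inj[simp]: "vmap n a = vmap n b \<longleftrightarrow> a = b" by (simp add: vmap_def ix_inj)
lemma vmap_ne_lt[simp]: "X < n \<Longrightarrow> vmap n \<gamma> \<noteq> X" using vmap_ge[of n \<gamma>] by linarith
lemma vmap_ne_lt'[simp]: "X < n \<Longrightarrow> X \<noteq> vmap n \<gamma>" using vmap_ge[of n \<gamma>] by linarith

lemma vmap_range: "set (map (vmap n) (lst (UNIV :: 'f set))) = {n..<n + card (UNIV :: 'f set)}"
proof -
  have "set (map (vmap n) (lst (UNIV :: 'f set))) = vmap n ` UNIV" by (simp add: set_lst)
  also have "\<dots> = (\<lambda>k. n + k) ` (ix ` UNIV)" unfolding vmap_def by auto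
  also have "ix ` UNIV = {..<card (UNIV :: 'f set)}" using ix_bij unfolding bij_betw_def by simp
  also have "(\<lambda>k. n + k) ` {..<card (UNIV :: 'f set)} = {n..<n + card (UNIV :: 'f set)}"
  proof (intro equalityI subsetI)
    fix y assume "y \<in> (\<lambda>k. n + k) ` {..<card (UNIV :: 'f set)}"
    then show "y \<in> {n..<n + card (UNIV :: 'f set)}" by auto
  next
    fix y assume y: "y \<in> {n..<n + card (UNIV :: 'f set)}"
    then have "y = n + (y - n)" "y - n \<in> {..<card (UNIV :: 'f set)}" by auto
    then show "y \<in> (\<lambda>k. n + k) ` {..<card (UNIV :: 'f set)}" by (rule image_eqI)
  qed
  finally show ?thesis .
qed

lemma vmap_surj: "n \<le> X \<Longrightarrow> X < n + card (UNIV :: 'f set) \<Longrightarrow> \<exists>\<gamma>. X = vmap n \<gamma>"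
  using vmap_range[of n] by (auto simp: set_lst)

definition ExV :: "nat \<Rightarrow> 'f cmso \<Rightarrow> 'f cmso" where
  "ExV n \<phi> = foldr Ex2 (map (vmap n) (lst (UNIV :: 'f set))) \<phi>"

lemma sat_ExV:
  "sat A \<sigma> \<tau> (ExV n \<phi>) \<longleftrightarrow>
   (\<exists>\<tau>'. (\<forall>X. X < n \<or> X \<ge> n + card (UNIV :: 'f set) \<longrightarrow> \<tau>' X = \<tau> X) \<and> (\<forall>\<gamma>. \<tau>' (vmap n \<gamma>) \<subseteq> univ_S A) \<and> sat A \<sigma> \<tau>' \<phi>)"
  unfolding ExV_def sat_foldr_Ex2 vmap_range
proof -
  have "(X \<notin> {n..<n + card (UNIV :: 'f set)}) = (X < n \<or> X \<ge> n + card (UNIV :: 'f set))" for X by auto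
  moreover have "(\<forall>X\<in>{n..<n + card (UNIV :: 'f set)}. \<tau>' X \<subseteq> univ_S A) = (\<forall>\<gamma>. \<tau>' (vmap n \<gamma>) \<subseteq> univ_S A)" for \<tau>'
    using vmap_surj[of n] vmap_ge[of n] vmap_lt[of n] by (metis atLeastLessThan_iff)
  ultimately show "(\<exists>\<tau>'. (\<forall>X. X \<notin> {n..<n + card (UNIV :: 'f set)} \<longrightarrow> \<tau>' X = \<tau> X) \<and> (\<forall>X\<in>{n..<n + card (UNIV :: 'f set)}. \<tau>' X \<subseteq> univ_S A) \<and> sat A \<sigma> \<tau>' \<phi>) =
    (\<exists>\<tau>'. (\<forall>X. X < n \<or> n + card (UNIV :: 'f set) \<le> X \<longrightarrow> \<tau>' X = \<tau> X) \<and> (\<forall>\<gamma>. \<tau>' (vmap n \<gamma>) \<subseteq> univ_S A) \<and> sat A \<sigma> \<tau>' \<phi>)"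
    by simp
qed

definition Unique :: "nat \<Rightarrow> ('f \<Rightarrow> nat) \<Rightarrow> 'f cmso" where
  "Unique x V = OrS UNIV (\<lambda>\<gamma>. Conj (Mem x (V \<gamma>)) (AndS {\<gamma>'. \<gamma>' \<noteq> \<gamma>} (\<lambda>\<gamma>'. Neg (Mem x (V \<gamma>')))))"

lemma sat_Unique: "sat A \<sigma> \<tau> (Unique x V) \<longleftrightarrow> (\<exists>\<gamma>. \<sigma> x \<in> \<tau> (V \<gamma>) \<and> (\<forall>\<gamma>'. \<gamma>' \<noteq> \<gamma> \<longrightarrow> \<sigma> x \<notin> \<tau> (V \<gamma>')))"
  unfolding Unique_def by simp

definition SumIs :: "nat \<Rightarrow> nat \<Rightarrow> ('f \<Rightarrow> nat) \<Rightarrow> 'f \<Rightarrow> nat \<Rightarrow> 'f cmso" where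
  "SumIs x T Al \<delta> n = OrS {r. (\<forall>k. r k < p) \<and> (\<Sum>k\<in>UNIV. fst k * snd k * of_nat (r k)) = \<delta>}
     (\<lambda>r. AndS UNIV (\<lambda>k. Ex2 n (Conj (cAll1 n (cIff (Mem n n) (Conj (Mem n T) (Conj (Mem n (Al (fst k))) (Entry (snd k) x n)))))
        (ModP (r k) p n))))"

lemma finite_R: "finite {r :: ('f \<times> 'f) \<Rightarrow> nat. (\<forall>k. r k < p) \<and> P r}"
proof -
  have "finite (Pi\<^sub>E (UNIV :: ('f \<times> 'f) set) (\<lambda>_. {..<p}))" by (intro finite_PiE) auto
  moreover have "{r :: ('f \<times> 'f) \<Rightarrow> nat. (\<forall>k. r k < p) \<and> P r} \<subseteq> Pi\<^sub>E UNIV (\<lambda>_. {..<p})"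
    by (auto simp: PiE_UNIV_domain)
  ultimately show ?thesis using finite_subset by blast
qed

lemma sum_group_pairs:
  fixes CT :: "nat set" and \<alpha> :: "nat \<Rightarrow> 'f" and a :: "nat \<Rightarrow> 'f"
  assumes "finite CT"
  shows "(\<Sum>c\<in>CT. \<alpha> c * a c) = (\<Sum>k\<in>UNIV. fst k * snd k * of_nat (card {c\<in>CT. \<alpha> c = fst k \<and> a c = snd k}))"
proof -
  have "(\<Sum>c\<in>CT. \<alpha> c * a c) = (\<Sum>k\<in>UNIV. \<Sum>c\<in>{c\<in>CT. (\<alpha> c, a c) = k}. \<alpha> c * a c)"
    by (rule sum.group[symmetric]) (use assms in auto)
  also have "\<dots> = (\<Sum>k\<in>UNIV. fst k * snd k * of_nat (card {c\<in>CT. \<alpha> c = fst k \<and> a c = snd k}))"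
  proof (rule sum.cong[OF refl])
    fix k :: "'f \<times> 'f"
    have "(\<Sum>c\<in>{c\<in>CT. (\<alpha> c, a c) = k}. \<alpha> c * a c) = (\<Sum>c\<in>{c\<in>CT. \<alpha> c = fst k \<and> a c = snd k}. fst k * snd k)"
      by (rule sum.cong) auto
    also have "\<dots> = of_nat (card {c\<in>CT. \<alpha> c = fst k \<and> a c = snd k}) * (fst k * snd k)" by simp
    finally show "(\<Sum>c\<in>{c\<in>CT. (\<alpha> c, a c) = k}. \<alpha> c * a c) = fst k * snd k * of_nat (card {c\<in>CT. \<alpha> c = fst k \<and> a c = snd k})"
      by (simp add: mult.commute)
  qed
  finally show ?thesis .
qed

lemma sat_SumIs:
  assumes xn: "x < n" and Tn: "T < n" and Aln: "\<And>\<gamma>. Al \<gamma> < n"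
    and sx: "\<sigma> x = Inl i" and i: "i < dim_row A"
    and T: "\<tau> T \<subseteq> Inr ` {..<dim_col A}"
    and enca: "\<And>c \<gamma>. c \<in> colset (\<tau> T) \<Longrightarrow> (Inr c \<in> \<tau> (Al \<gamma>)) = (\<alpha> c = \<gamma>)"
  shows "sat A \<sigma> \<tau> (SumIs x T Al \<delta> n) \<longleftrightarrow> (\<Sum>c\<in>colset (\<tau> T). \<alpha> c * A $$ (i, c)) = \<delta>"
proof -
  let ?CT = "colset (\<tau> T)"
  define N where "N k = card {c\<in>?CT. \<alpha> c = fst k \<and> A $$ (i,c) = snd k}" for k :: "'f \<times> 'f"
  have CT: "?CT \<subseteq> {..<dim_col A}" using colset_sub[OF T] .
  have fCT: "finite ?CT" using CT finite_subset by blast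
  have ex: "sat A \<sigma> \<tau> (Ex2 n (Conj (cAll1 n (cIff (Mem n n) (Conj (Mem n T) (Conj (Mem n (Al (fst k))) (Entry (snd k) x n)))))
        (ModP (r k) p n))) \<longleftrightarrow> N k mod p = r k mod p" for k r
  proof -
    define Ek where "Ek = (Inr :: nat \<Rightarrow> nat + nat) ` {c\<in>?CT. \<alpha> c = fst k \<and> A $$ (i,c) = snd k}"
    have EkU: "Ek \<subseteq> univ_S A" unfolding Ek_def using CT Inr_univ[of A] by blast
    have cEk: "card Ek = N k" unfolding Ek_def N_def by (simp add: card_image)
    have memb: "(e \<in> \<tau> T \<and> e \<in> \<tau> (Al (fst k)) \<and> (\<exists>i' j. \<sigma> x = Inl i' \<and> e = Inr j \<and> i' < dim_row A \<and> j < dim_col A \<and> A $$ (i', j) = snd k))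
        \<longleftrightarrow> e \<in> Ek" for e
    proof
      assume h: "e \<in> \<tau> T \<and> e \<in> \<tau> (Al (fst k)) \<and> (\<exists>i' j. \<sigma> x = Inl i' \<and> e = Inr j \<and> i' < dim_row A \<and> j < dim_col A \<and> A $$ (i', j) = snd k)"
      then obtain j where j: "e = Inr j" "A $$ (i, j) = snd k" using sx by auto
      have jc: "j \<in> ?CT" using h j unfolding colset_def by auto
      have "\<alpha> j = fst k" using enca[OF jc, of "fst k"] h j by simp
      then show "e \<in> Ek" unfolding Ek_def using j jc by auto
    next
      assume "e \<in> Ek"
      then obtain j where j: "e = Inr j" "j \<in> ?CT" "\<alpha> j = fst k" "A $$ (i,j) = snd k" unfolding Ek_def by auto
      have "Inr j \<in> \<tau> T" using j(2) unfolding colset_def by simp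
      moreover have "Inr j \<in> \<tau> (Al (fst k))" using enca[OF j(2)] j(3) by simp
      moreover have "j < dim_col A" using j(2) CT by auto
      ultimately show "e \<in> \<tau> T \<and> e \<in> \<tau> (Al (fst k)) \<and> (\<exists>i' j. \<sigma> x = Inl i' \<and> e = Inr j \<and> i' < dim_row A \<and> j < dim_col A \<and> A $$ (i', j) = snd k)"
        using j sx i by auto
    qed
    have memb2: "(e \<in> \<tau> T \<and> e \<in> \<tau> (Al (fst k)) \<and> (\<exists>i. \<sigma> x = Inl i \<and> (\<exists>j. e = Inr j \<and> i < dim_row A \<and> j < dim_col A \<and> A $$ (i, j) = snd k)))
        \<longleftrightarrow> e \<in> Ek" for e using memb[of e] by blast
    have Tne: "T \<noteq> n" and Alne: "Al (fst k) \<noteq> n" and xne: "x \<noteq> n" using Tn Aln[of "fst k"] xn by auto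
    have "sat A \<sigma> \<tau> (Ex2 n (Conj (cAll1 n (cIff (Mem n n) (Conj (Mem n T) (Conj (Mem n (Al (fst k))) (Entry (snd k) x n)))))
        (ModP (r k) p n))) \<longleftrightarrow> (\<exists>E. E \<subseteq> univ_S A \<and> (\<forall>e\<in>univ_S A. e \<in> E \<longleftrightarrow> e \<in> Ek) \<and> card E mod p = r k mod p)"
      using Tne Alne xne by (simp add: memb2)
    also have "\<dots> \<longleftrightarrow> card Ek mod p = r k mod p"
    proof
      assume "\<exists>E. E \<subseteq> univ_S A \<and> (\<forall>e\<in>univ_S A. e \<in> E \<longleftrightarrow> e \<in> Ek) \<and> card E mod p = r k mod p"
      then obtain E where "E \<subseteq> univ_S A" "\<forall>e\<in>univ_S A. e \<in> E \<longleftrightarrow> e \<in> Ek" "card E mod p = r k mod p" by blast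
      moreover then have "E = Ek" using EkU by blast
      ultimately show "card Ek mod p = r k mod p" by simp
    next
      assume "card Ek mod p = r k mod p"
      then show "\<exists>E. E \<subseteq> univ_S A \<and> (\<forall>e\<in>univ_S A. e \<in> E \<longleftrightarrow> e \<in> Ek) \<and> card E mod p = r k mod p"
        using EkU by blast
    qed
    finally show ?thesis using cEk by simp
  qed
  have "sat A \<sigma> \<tau> (SumIs x T Al \<delta> n) \<longleftrightarrow>
     (\<exists>r. ((\<forall>k. r k < p) \<and> (\<Sum>k\<in>UNIV. fst k * snd k * of_nat (r k)) = \<delta>) \<and> (\<forall>k. N k mod p = r k mod p))"
    unfolding SumIs_def sat_OrS[OF finite_R] sat_AndS[OF finite_UNIV] ex by blast
  also have "\<dots> \<longleftrightarrow> (\<Sum>k\<in>UNIV. fst k * snd k * of_nat (N k)) = \<delta>"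
  proof
    assume "\<exists>r. ((\<forall>k. r k < p) \<and> (\<Sum>k\<in>UNIV. fst k * snd k * of_nat (r k)) = \<delta>) \<and> (\<forall>k. N k mod p = r k mod p)"
    then obtain r where r: "\<forall>k. r k < p" "(\<Sum>k\<in>UNIV. fst k * snd k * of_nat (r k)) = \<delta>" "\<forall>k. N k mod p = r k mod p" by blast
    have "r k = N k mod p" for k using r(1)[rule_format, of k] r(3)[rule_format, of k] by simp
    then have "(of_nat (r k) :: 'f) = of_nat (N k)" for k using of_nat_mod_char[OF p_char] by simp
    then show "(\<Sum>k\<in>UNIV. fst k * snd k * of_nat (N k)) = \<delta>" using r(2) by simp
  next
    assume h: "(\<Sum>k\<in>UNIV. fst k * snd k * of_nat (N k)) = \<delta>"
    define r where "r k = N k mod p" for k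
    have "(of_nat (r k) :: 'f) = of_nat (N k)" for k unfolding r_def using of_nat_mod_char[OF p_char] by simp
    then have "(\<forall>k. r k < p) \<and> (\<Sum>k\<in>UNIV. fst k * snd k * of_nat (r k)) = \<delta>" using h p_pos by (simp add: r_def)
    moreover have "\<forall>k. N k mod p = r k mod p" by (simp add: r_def)
    ultimately show "\<exists>r. ((\<forall>k. r k < p) \<and> (\<Sum>k\<in>UNIV. fst k * snd k * of_nat (r k)) = \<delta>) \<and> (\<forall>k. N k mod p = r k mod p)" by blast
  qed
  also have "(\<Sum>k\<in>UNIV. fst k * snd k * of_nat (N k)) = (\<Sum>c\<in>?CT. \<alpha> c * A $$ (i, c))"
    unfolding N_def by (rule sum_group_pairs[symmetric, OF fCT])
  finally show ?thesis .
qed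

end

lemma vec_eq_vec: "vec m f = vec m g \<longleftrightarrow> (\<forall>i<m. f i = g i)"
  by (auto simp: vec_eq_iff)

lemma sat_Conj: "sat A \<sigma> \<tau> (Conj p q) \<longleftrightarrow> sat A \<sigma> \<tau> p \<and> sat A \<sigma> \<tau> q" by simp
lemma sat_Mem: "sat A \<sigma> \<tau> (Mem x X) \<longleftrightarrow> \<sigma> x \<in> \<tau> X" by simp
lemma sat_RowP: "sat A \<sigma> \<tau> (RowP x) \<longleftrightarrow> \<sigma> x \<in> Inl ` {..<dim_row A}" by simp

context fx begin

definition RowEq :: "nat \<Rightarrow> nat \<Rightarrow> ('f \<Rightarrow> nat) \<Rightarrow> ('f \<Rightarrow> nat) list \<Rightarrow> 'f list \<Rightarrow> nat \<Rightarrow> 'f cmso" where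
  "RowEq x T Al Vs \<beta> n = OrS {w. length w = length Vs}
     (\<lambda>w. Conj (AndS {..<length Vs} (\<lambda>j. Mem x ((Vs!j) (w!j)))) (SumIs x T Al (\<Sum>j<length Vs. \<beta>!j * w!j) n))"

lemma sat_RowEq:
  assumes xn: "x < n" and Tn: "T < n" and Aln: "\<And>\<gamma>. Al \<gamma> < n"
    and sx: "\<sigma> x = Inl i" and i: "i < dim_row A"
    and T: "\<tau> T \<subseteq> Inr ` {..<dim_col A}"
    and enca: "\<And>c \<gamma>. c \<in> colset (\<tau> T) \<Longrightarrow> (Inr c \<in> \<tau> (Al \<gamma>)) = (\<alpha> c = \<gamma>)"
    and es: "encs A \<tau> Vs vs"
  shows "sat A \<sigma> \<tau> (RowEq x T Al Vs \<beta> n) \<longleftrightarrow>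
    (\<Sum>c\<in>colset (\<tau> T). \<alpha> c * A $$ (i, c)) = (\<Sum>j<length Vs. \<beta>!j * vs!j $ i)"
proof -
  let ?L = "\<Sum>c\<in>colset (\<tau> T). \<alpha> c * A $$ (i, c)"
  have mem: "(\<sigma> x \<in> \<tau> ((Vs!j) \<gamma>)) = (vs!j $ i = \<gamma>)" if "j < length Vs" for j \<gamma>
    using es that sx i unfolding encs_def encv_def by auto
  have si: "sat A \<sigma> \<tau> (SumIs x T Al \<delta> n) \<longleftrightarrow> ?L = \<delta>" for \<delta>
    by (rule sat_SumIs[where x=x and n=n and T=T and Al=Al and \<sigma>=\<sigma> and i=i and A=A and \<tau>=\<tau> and \<alpha>=\<alpha>, OF xn Tn Aln sx i T enca])
  have "sat A \<sigma> \<tau> (RowEq x T Al Vs \<beta> n) \<longleftrightarrow>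
      (\<exists>w\<in>{w. length w = length Vs}. (\<forall>j\<in>{..<length Vs}. \<sigma> x \<in> \<tau> ((Vs!j) (w!j))) \<and> ?L = (\<Sum>j<length Vs. \<beta>!j * w!j))"
    unfolding RowEq_def sat_OrS[OF finite_lists_len] sat_Conj sat_AndS[OF finite_lessThan] sat_Mem si ..
  also have "\<dots> \<longleftrightarrow> ?L = (\<Sum>j<length Vs. \<beta>!j * vs!j $ i)"
  proof
    assume "\<exists>w\<in>{w. length w = length Vs}. (\<forall>j\<in>{..<length Vs}. \<sigma> x \<in> \<tau> ((Vs!j) (w!j))) \<and> ?L = (\<Sum>j<length Vs. \<beta>!j * w!j)"
    then obtain w where w: "length w = length Vs" "\<forall>j\<in>{..<length Vs}. \<sigma> x \<in> \<tau> ((Vs!j) (w!j))" "?L = (\<Sum>j<length Vs. \<beta>!j * w!j)"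
      by blast
    have "(\<Sum>j<length Vs. \<beta>!j * w!j) = (\<Sum>j<length Vs. \<beta>!j * vs!j $ i)"
    proof (rule sum.cong[OF refl])
      fix j assume "j \<in> {..<length Vs}"
      then show "\<beta>!j * w!j = \<beta>!j * vs!j $ i" using w(2) mem by auto
    qed
    then show "?L = (\<Sum>j<length Vs. \<beta>!j * vs!j $ i)" using w(3) by simp
  next
    assume h: "?L = (\<Sum>j<length Vs. \<beta>!j * vs!j $ i)"
    define w where "w = map (\<lambda>j. vs!j $ i) [0..<length Vs]"
    have "length w = length Vs" by (simp add: w_def)
    moreover have "\<forall>j\<in>{..<length Vs}. \<sigma> x \<in> \<tau> ((Vs!j) (w!j))" using mem by (simp add: w_def)
    moreover have "(\<Sum>j<length Vs. \<beta>!j * w!j) = (\<Sum>j<length Vs. \<beta>!j * vs!j $ i)"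
      by (rule sum.cong[OF refl]) (simp add: w_def)
    ultimately show "\<exists>w\<in>{w. length w = length Vs}. (\<forall>j\<in>{..<length Vs}. \<sigma> x \<in> \<tau> ((Vs!j) (w!j))) \<and> ?L = (\<Sum>j<length Vs. \<beta>!j * w!j)"
      using h by auto
  qed
  finally show ?thesis .
qed

definition InSpan :: "nat \<Rightarrow> ('f \<Rightarrow> nat) \<Rightarrow> ('f \<Rightarrow> nat) list \<Rightarrow> nat \<Rightarrow> 'f cmso" where
  "InSpan T Al Vs n = OrS {\<beta>. length \<beta> = length Vs} (\<lambda>\<beta>. cAll1 n (cImp (RowP n) (RowEq n T Al Vs \<beta> (Suc n))))"

lemma sat_InSpan:
  assumes Tn: "T < n" and Aln: "\<And>\<gamma>. Al \<gamma> < n"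
    and T: "\<tau> T \<subseteq> Inr ` {..<dim_col A}"
    and enca: "\<And>c \<gamma>. c \<in> colset (\<tau> T) \<Longrightarrow> (Inr c \<in> \<tau> (Al \<gamma>)) = (\<alpha> c = \<gamma>)"
    and es: "encs A \<tau> Vs vs"
  shows "sat A \<sigma> \<tau> (InSpan T Al Vs n) \<longleftrightarrow> lincomb_cols A \<alpha> (colset (\<tau> T)) \<in> Kof (dim_row A) vs"
proof -
  let ?L = "\<lambda>i. \<Sum>c\<in>colset (\<tau> T). \<alpha> c * A $$ (i, c)"
  have len: "length Vs = length vs" using es unfolding encs_def by simp
  have row: "sat A (\<sigma>(n := Inl i)) \<tau> (RowEq n T Al Vs \<beta> (Suc n)) \<longleftrightarrow> ?L i = (\<Sum>j<length Vs. \<beta>!j * vs!j $ i)"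
    if "i < dim_row A" for i \<beta>
  proof (rule sat_RowEq)
    show "\<And>\<gamma>. Al \<gamma> < Suc n" using Aln less_Suc_eq by blast
  qed (use Tn T enca es that in auto)
  have all: "(\<forall>e\<in>univ_S A. (\<sigma>(n:=e)) n \<in> Inl ` {..<dim_row A} \<longrightarrow> sat A (\<sigma>(n:=e)) \<tau> (RowEq n T Al Vs \<beta> (Suc n)))
     \<longleftrightarrow> (\<forall>i<dim_row A. ?L i = (\<Sum>j<length Vs. \<beta>!j * vs!j $ i))" for \<beta>
  proof
    assume h: "\<forall>e\<in>univ_S A. (\<sigma>(n:=e)) n \<in> Inl ` {..<dim_row A} \<longrightarrow> sat A (\<sigma>(n:=e)) \<tau> (RowEq n T Al Vs \<beta> (Suc n))"
    show "\<forall>i<dim_row A. ?L i = (\<Sum>j<length Vs. \<beta>!j * vs!j $ i)"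
    proof (intro allI impI)
      fix i assume i: "i < dim_row A"
      then have "Inl i \<in> univ_S A" unfolding univ_S_def by auto
      then have "sat A (\<sigma>(n:=Inl i)) \<tau> (RowEq n T Al Vs \<beta> (Suc n))" using h i by auto
      then show "?L i = (\<Sum>j<length Vs. \<beta>!j * vs!j $ i)" using row[OF i] by simp
    qed
  next
    assume h: "\<forall>i<dim_row A. ?L i = (\<Sum>j<length Vs. \<beta>!j * vs!j $ i)"
    show "\<forall>e\<in>univ_S A. (\<sigma>(n:=e)) n \<in> Inl ` {..<dim_row A} \<longrightarrow> sat A (\<sigma>(n:=e)) \<tau> (RowEq n T Al Vs \<beta> (Suc n))"
    proof (intro ballI impI)
      fix e assume "e \<in> univ_S A" "(\<sigma>(n:=e)) n \<in> Inl ` {..<dim_row A}"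
      then obtain i where i: "e = Inl i" "i < dim_row A" by auto
      then show "sat A (\<sigma>(n:=e)) \<tau> (RowEq n T Al Vs \<beta> (Suc n))" using row[OF i(2)] h by simp
    qed
  qed
  have "sat A \<sigma> \<tau> (InSpan T Al Vs n) \<longleftrightarrow>
      (\<exists>\<beta>\<in>{\<beta>. length \<beta> = length Vs}. \<forall>i<dim_row A. ?L i = (\<Sum>j<length Vs. \<beta>!j * vs!j $ i))"
    unfolding InSpan_def sat_OrS[OF finite_lists_len] sat_cAll1 sat_cImp sat_RowP all ..
  also have "\<dots> \<longleftrightarrow> lincomb_cols A \<alpha> (colset (\<tau> T)) \<in> Kof (dim_row A) vs"
    unfolding Kof_def lincomb_cols_def len by (auto simp: vec_eq_vec)
  finally show ?thesis .
qed

definition Dep :: "nat \<Rightarrow> ('f \<Rightarrow> nat) list \<Rightarrow> nat \<Rightarrow> 'f cmso" where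
  "Dep T Vs n = ExV n (Conj (cAll1 n (cImp (Mem n T) (Unique n (vmap n))))
      (Conj (Ex1 n (Conj (Mem n T) (Neg (Mem n (vmap n 0))))) (InSpan T (vmap n) Vs (n + card (UNIV :: 'f set)))))"

lemma sat_Dep:
  assumes Tn: "T < n" and vbn: "vb Vs n" and T: "\<tau> T \<subseteq> Inr ` {..<dim_col A}" and es: "encs A \<tau> Vs vs"
  shows "sat A \<sigma> \<tau> (Dep T Vs n) \<longleftrightarrow> dependent_M A (Kof (dim_row A) vs) (colset (\<tau> T))"
proof
  assume "sat A \<sigma> \<tau> (Dep T Vs n)"
  then obtain \<tau>' where t: "\<forall>X. X < n \<or> X \<ge> n + card (UNIV :: 'f set) \<longrightarrow> \<tau>' X = \<tau> X" "\<forall>\<gamma>. \<tau>' (vmap n \<gamma>) \<subseteq> univ_S A"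
     and u: "\<forall>e\<in>univ_S A. e \<in> \<tau>' T \<longrightarrow> (\<exists>\<gamma>. e \<in> \<tau>' (vmap n \<gamma>) \<and> (\<forall>\<gamma>'. \<gamma>' \<noteq> \<gamma> \<longrightarrow> e \<notin> \<tau>' (vmap n \<gamma>')))"
     and nz: "\<exists>e\<in>univ_S A. e \<in> \<tau>' T \<and> e \<notin> \<tau>' (vmap n 0)"
     and sp: "sat A \<sigma> \<tau>' (InSpan T (vmap n) Vs (n + card (UNIV :: 'f set)))"
    unfolding Dep_def sat_ExV by (auto simp: sat_Unique)
  have tT: "\<tau>' T = \<tau> T" using t(1) Tn by auto
  define \<alpha> where "\<alpha> c = (THE \<gamma>. Inr c \<in> \<tau>' (vmap n \<gamma>))" for c
  have enca: "(Inr c \<in> \<tau>' (vmap n \<gamma>)) = (\<alpha> c = \<gamma>)" if "c \<in> colset (\<tau>' T)" for c \<gamma>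
  proof -
    have "Inr c \<in> \<tau>' T" using that unfolding colset_def by auto
    moreover then have "Inr c \<in> univ_S A" using T tT Inr_univ[of A] by auto
    ultimately obtain \<gamma>0 where g: "Inr c \<in> \<tau>' (vmap n \<gamma>0)" "\<forall>\<gamma>'. \<gamma>' \<noteq> \<gamma>0 \<longrightarrow> Inr c \<notin> \<tau>' (vmap n \<gamma>')"
      using u by blast
    have a0: "\<alpha> c = \<gamma>0" unfolding \<alpha>_def using g by (intro the_equality) auto
    show ?thesis
    proof
      assume "Inr c \<in> \<tau>' (vmap n \<gamma>)"
      then have "\<not> \<gamma> \<noteq> \<gamma>0" using g(2) by blast
      then show "\<alpha> c = \<gamma>" using a0 by simp
    next
      assume "\<alpha> c = \<gamma>"
      then show "Inr c \<in> \<tau>' (vmap n \<gamma>)" using a0 g(1) by simp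
    qed
  qed
  have es': "encs A \<tau>' Vs vs" using encs_frame[OF vbn, of \<tau>' \<tau>] t(1) es by auto
  have T': "\<tau>' T \<subseteq> Inr ` {..<dim_col A}" using tT T by simp
  have "lincomb_cols A \<alpha> (colset (\<tau>' T)) \<in> Kof (dim_row A) vs"
    using sp sat_InSpan[of T "n + card (UNIV :: 'f set)" "vmap n" \<tau>' A \<alpha> Vs vs \<sigma>] Tn T' enca es' by simp
  moreover obtain e where e: "e \<in> univ_S A" "e \<in> \<tau>' T" "e \<notin> \<tau>' (vmap n 0)" using nz by blast
  then obtain c where c: "e = Inr c" "c \<in> colset (\<tau>' T)" using T' unfolding colset_def by auto
  have "\<alpha> c \<noteq> 0" using enca[OF c(2), of 0] e(3) c(1) by simp
  moreover have "colset (\<tau>' T) \<subseteq> {..<dim_col A}" using colset_sub[OF T'] .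
  ultimately show "dependent_M A (Kof (dim_row A) vs) (colset (\<tau> T))"
    unfolding dependent_M_def using c(2) tT by auto
next
  assume "dependent_M A (Kof (dim_row A) vs) (colset (\<tau> T))"
  then obtain \<alpha> c where a: "colset (\<tau> T) \<subseteq> {..<dim_col A}" "c \<in> colset (\<tau> T)" "\<alpha> c \<noteq> 0"
      "lincomb_cols A \<alpha> (colset (\<tau> T)) \<in> Kof (dim_row A) vs"
    unfolding dependent_M_def by blast
  define \<tau>' where "\<tau>' X = (if n \<le> X \<and> X < n + card (UNIV :: 'f set)
      then (Inr :: nat \<Rightarrow> nat + nat) ` {c'. c' < dim_col A \<and> vmap n (\<alpha> c') = X} else \<tau> X)" for X
  have t1: "\<forall>X. X < n \<or> X \<ge> n + card (UNIV :: 'f set) \<longrightarrow> \<tau>' X = \<tau> X" unfolding \<tau>'_def by auto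
  have tv: "\<tau>' (vmap n \<gamma>) = Inr ` {c'. c' < dim_col A \<and> \<alpha> c' = \<gamma>}" for \<gamma>
    unfolding \<tau>'_def by simp
  have t2: "\<forall>\<gamma>. \<tau>' (vmap n \<gamma>) \<subseteq> univ_S A" unfolding tv univ_S_def by auto
  have tT: "\<tau>' T = \<tau> T" using t1 Tn by auto
  have T': "\<tau>' T \<subseteq> Inr ` {..<dim_col A}" using tT T by simp
  have enca: "(Inr c' \<in> \<tau>' (vmap n \<gamma>)) = (\<alpha> c' = \<gamma>)" if "c' \<in> colset (\<tau>' T)" for c' \<gamma>
  proof -
    have "c' < dim_col A" using that colset_sub[OF T'] by auto
    then show ?thesis unfolding tv by auto
  qed
  have es': "encs A \<tau>' Vs vs" using encs_frame[OF vbn, of \<tau>' \<tau>] t1 es by auto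
  have c1: "\<forall>e\<in>univ_S A. e \<in> \<tau>' T \<longrightarrow> (\<exists>\<gamma>. e \<in> \<tau>' (vmap n \<gamma>) \<and> (\<forall>\<gamma>'. \<gamma>' \<noteq> \<gamma> \<longrightarrow> e \<notin> \<tau>' (vmap n \<gamma>')))"
  proof (intro ballI impI)
    fix e assume "e \<in> univ_S A" "e \<in> \<tau>' T"
    then obtain c' where c': "e = Inr c'" "c' \<in> colset (\<tau>' T)" using T' unfolding colset_def by auto
    show "\<exists>\<gamma>. e \<in> \<tau>' (vmap n \<gamma>) \<and> (\<forall>\<gamma>'. \<gamma>' \<noteq> \<gamma> \<longrightarrow> e \<notin> \<tau>' (vmap n \<gamma>'))"
      using enca[OF c'(2)] c'(1) by (intro exI[of _ "\<alpha> c'"]) auto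
  qed
  have c2: "\<exists>e\<in>univ_S A. e \<in> \<tau>' T \<and> e \<notin> \<tau>' (vmap n 0)"
  proof -
    have "Inr c \<in> \<tau>' T" using a(2) tT unfolding colset_def by simp
    moreover have "Inr c \<in> univ_S A" using a(1,2) unfolding univ_S_def by auto
    moreover have "Inr c \<notin> \<tau>' (vmap n 0)" using enca[of c 0] a(2,3) tT by simp
    ultimately show ?thesis by blast
  qed
  have c3: "sat A \<sigma> \<tau>' (InSpan T (vmap n) Vs (n + card (UNIV :: 'f set)))"
    using sat_InSpan[of T "n + card (UNIV :: 'f set)" "vmap n" \<tau>' A \<alpha> Vs vs \<sigma>] Tn T' enca es' a(4) tT by simp
  show "sat A \<sigma> \<tau> (Dep T Vs n)"
    unfolding Dep_def sat_ExV using t1 t2 c1 c2 c3 by (auto simp: sat_Unique intro!: exI[of _ \<tau>'])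
qed

end

lemma encs_snoc: "encs A \<tau> (Vs@[V]) (vs@[v]) \<longleftrightarrow> encs A \<tau> Vs vs \<and> encv A \<tau> V v \<and> v \<in> carrier_vec (dim_row A)"
proof (cases "length Vs = length vs")
  case False
  then show ?thesis unfolding encs_def by simp
next
  case L: True
  let ?P = "\<lambda>j. encv A \<tau> ((Vs@[V])!j) ((vs@[v])!j) \<and> (vs@[v])!j \<in> carrier_vec (dim_row A)"
  have a: "?P j \<longleftrightarrow> encv A \<tau> (Vs!j) (vs!j) \<and> vs!j \<in> carrier_vec (dim_row A)" if "j < length vs" for j
    using that L by (simp add: nth_append_left)
  have b: "?P (length vs) \<longleftrightarrow> encv A \<tau> V v \<and> v \<in> carrier_vec (dim_row A)"
    using L by (metis nth_append_length)
  have "(\<forall>j<length (vs@[v]). ?P j) \<longleftrightarrow> (\<forall>j<length vs. ?P j) \<and> ?P (length vs)"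
    by (simp only: length_append_singleton All_less_Suc) blast
  then show ?thesis unfolding encs_def using a b L by auto
qed

lemma vb_snoc: "vb (Vs@[V]) n \<longleftrightarrow> vb Vs n \<and> (\<forall>\<gamma>. V \<gamma> < n)"
proof -
  let ?P = "\<lambda>j. \<forall>\<gamma>. ((Vs@[V])!j) \<gamma> < n"
  have a: "?P j \<longleftrightarrow> (\<forall>\<gamma>. (Vs!j) \<gamma> < n)" if "j < length Vs" for j
    using that by (simp add: nth_append_left)
  have b: "?P (length Vs) \<longleftrightarrow> (\<forall>\<gamma>. V \<gamma> < n)" by simp
  have "(\<forall>j<length (Vs@[V]). ?P j) \<longleftrightarrow> (\<forall>j<length Vs. ?P j) \<and> ?P (length Vs)"
    by (simp only: length_append_singleton All_less_Suc) blast
  then show ?thesis unfolding vb_def using a b by auto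
qed

lemma encs_Nil: "encs A \<tau> [] []" unfolding encs_def by simp
lemma vb_Nil: "vb [] n" unfolding vb_def by simp

lemma inr_obtain:
  assumes "e \<in> E" "E \<subseteq> Inr ` X"
  obtains x where "e = Inr x" "x \<in> colset E" "x \<in> X"
proof -
  have "e \<in> Inr ` X" using assms by blast
  then obtain x where x: "x \<in> X" "e = Inr x" by blast
  then have "x \<in> colset E" using assms(1) unfolding colset_def by simp
  then show ?thesis using x that by blast
qed

context fx begin

definition Sub :: "nat \<Rightarrow> nat \<Rightarrow> nat \<Rightarrow> 'f cmso" where "Sub X Y n = cAll1 n (cImp (Mem n X) (Mem n Y))"
definition SetEq :: "nat \<Rightarrow> nat \<Rightarrow> nat \<Rightarrow> 'f cmso" where "SetEq X Y n = Conj (Sub X Y n) (Sub Y X n)"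

lemma sat_Sub: "sat A \<sigma> \<tau> (Sub X Y n) \<longleftrightarrow> (\<forall>e\<in>univ_S A. e \<in> \<tau> X \<longrightarrow> e \<in> \<tau> Y)"
  by (simp add: Sub_def)
lemma sat_SetEq: "sat A \<sigma> \<tau> (SetEq X Y n) \<longleftrightarrow> (\<forall>e\<in>univ_S A. e \<in> \<tau> X \<longleftrightarrow> e \<in> \<tau> Y)"
  by (auto simp: SetEq_def sat_Sub)

definition Circ :: "nat \<Rightarrow> nat \<Rightarrow> ('f \<Rightarrow> nat) list \<Rightarrow> nat \<Rightarrow> 'f cmso" where
  "Circ D S Vs n = Conj (Sub D S n) (Conj (Dep D Vs n)
     (cAll2 n (cImp (Conj (Sub n D n) (Neg (SetEq n D n))) (Neg (Dep n Vs (Suc n))))))"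

lemma sat_Circ:
  assumes Dn: "D < n" and Sn: "S < n" and vbn: "vb Vs n" and S: "\<tau> S \<subseteq> Inr ` {..<dim_col A}"
    and DU: "\<tau> D \<subseteq> univ_S A" and es: "encs A \<tau> Vs vs"
  shows "sat A \<sigma> \<tau> (Circ D S Vs n) \<longleftrightarrow>
    \<tau> D \<subseteq> \<tau> S \<and> circuit_M A (Kof (dim_row A) vs) (colset (\<tau> S)) (colset (\<tau> D))"
proof (cases "\<tau> D \<subseteq> \<tau> S")
  case False
  then have "\<not> sat A \<sigma> \<tau> (Sub D S n)" using DU by (auto simp: sat_Sub)
  then show ?thesis using False by (simp add: Circ_def)
next
  case True
  let ?K = "Kof (dim_row A) vs"
  have D: "\<tau> D \<subseteq> Inr ` {..<dim_col A}" using True S by blast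
  have sub: "sat A \<sigma> \<tau> (Sub D S n)" using True by (auto simp: sat_Sub)
  have dep: "sat A \<sigma> \<tau> (Dep D Vs n) \<longleftrightarrow> dependent_M A ?K (colset (\<tau> D))"
    by (rule sat_Dep[OF Dn vbn D es])
  have Dne: "D \<noteq> n" using Dn by simp
  have inner: "sat A \<sigma> (\<tau>(n:=E)) (cImp (Conj (Sub n D n) (Neg (SetEq n D n))) (Neg (Dep n Vs (Suc n))))
      \<longleftrightarrow> (E \<subseteq> \<tau> D \<and> E \<noteq> \<tau> D \<longrightarrow> \<not> dependent_M A ?K (colset E))" if E: "E \<subseteq> univ_S A" for E
  proof -
    have s1: "sat A \<sigma> (\<tau>(n:=E)) (Sub n D n) \<longleftrightarrow> E \<subseteq> \<tau> D" using E Dne by (auto simp: sat_Sub)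
    have s2: "sat A \<sigma> (\<tau>(n:=E)) (SetEq n D n) \<longleftrightarrow> E = \<tau> D" using E DU Dne by (auto simp: sat_SetEq)
    have s3: "sat A \<sigma> (\<tau>(n:=E)) (Dep n Vs (Suc n)) \<longleftrightarrow> dependent_M A ?K (colset E)" if "E \<subseteq> \<tau> D"
    proof -
      have "encs A (\<tau>(n:=E)) Vs vs" using encs_frame[OF vbn, of "\<tau>(n:=E)" \<tau>] es by simp
      moreover have "(\<tau>(n:=E)) n \<subseteq> Inr ` {..<dim_col A}" using that D by simp
      ultimately show ?thesis using sat_Dep[of n "Suc n" Vs "\<tau>(n:=E)" A vs \<sigma>] vb_mono[OF vbn] by simp
    qed
    show ?thesis using s1 s2 s3 by auto
  qed
  have all: "sat A \<sigma> \<tau> (cAll2 n (cImp (Conj (Sub n D n) (Neg (SetEq n D n))) (Neg (Dep n Vs (Suc n)))))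
      \<longleftrightarrow> (\<forall>C'. C' \<subset> colset (\<tau> D) \<longrightarrow> \<not> dependent_M A ?K C')"
  proof -
    have "sat A \<sigma> \<tau> (cAll2 n (cImp (Conj (Sub n D n) (Neg (SetEq n D n))) (Neg (Dep n Vs (Suc n)))))
      \<longleftrightarrow> (\<forall>E. E \<subseteq> univ_S A \<longrightarrow> (E \<subseteq> \<tau> D \<and> E \<noteq> \<tau> D \<longrightarrow> \<not> dependent_M A ?K (colset E)))"
      using inner by simp
    also have "\<dots> \<longleftrightarrow> (\<forall>C'. C' \<subset> colset (\<tau> D) \<longrightarrow> \<not> dependent_M A ?K C')"
    proof
      assume h: "\<forall>E. E \<subseteq> univ_S A \<longrightarrow> (E \<subseteq> \<tau> D \<and> E \<noteq> \<tau> D \<longrightarrow> \<not> dependent_M A ?K (colset E))"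
      show "\<forall>C'. C' \<subset> colset (\<tau> D) \<longrightarrow> \<not> dependent_M A ?K C'"
      proof (intro allI impI)
        fix C' assume C': "C' \<subset> colset (\<tau> D)"
        have e: "Inr ` colset (\<tau> D) = \<tau> D" by (rule Inr_colset[OF D])
        have "(Inr :: nat \<Rightarrow> nat + nat) ` C' \<subseteq> Inr ` colset (\<tau> D)" using C' by blast
        then have "(Inr :: nat \<Rightarrow> nat + nat) ` C' \<subseteq> \<tau> D" using e by simp
        moreover have "(Inr :: nat \<Rightarrow> nat + nat) ` C' \<noteq> \<tau> D"
        proof
          assume "(Inr :: nat \<Rightarrow> nat + nat) ` C' = \<tau> D"
          then have "colset ((Inr :: nat \<Rightarrow> nat + nat) ` C') = colset (\<tau> D)" by simp
          then show False using C' by simp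
        qed
        moreover have "(Inr :: nat \<Rightarrow> nat + nat) ` C' \<subseteq> univ_S A" using \<open>(Inr :: nat \<Rightarrow> nat + nat) ` C' \<subseteq> \<tau> D\<close> DU by blast
        ultimately show "\<not> dependent_M A ?K C'" using h[rule_format, of "(Inr :: nat \<Rightarrow> nat + nat) ` C'"] by simp
      qed
    next
      assume h: "\<forall>C'. C' \<subset> colset (\<tau> D) \<longrightarrow> \<not> dependent_M A ?K C'"
      show "\<forall>E. E \<subseteq> univ_S A \<longrightarrow> (E \<subseteq> \<tau> D \<and> E \<noteq> \<tau> D \<longrightarrow> \<not> dependent_M A ?K (colset E))"
      proof (intro allI impI)
        fix E assume E: "E \<subseteq> univ_S A" "E \<subseteq> \<tau> D \<and> E \<noteq> \<tau> D"
        have "E \<subseteq> Inr ` {..<dim_col A}" using E D by blast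
        then have "Inr ` colset E = E" by (rule Inr_colset)
        moreover have "Inr ` colset (\<tau> D) = \<tau> D" by (rule Inr_colset[OF D])
        have s1: "colset E \<subseteq> colset (\<tau> D)" using E unfolding colset_def by blast
        have s2: "colset E \<noteq> colset (\<tau> D)"
        proof
          assume "colset E = colset (\<tau> D)"
          then have "E = \<tau> D" using \<open>Inr ` colset E = E\<close> \<open>Inr ` colset (\<tau> D) = \<tau> D\<close> by metis
          then show False using E by blast
        qed
        have "colset E \<subset> colset (\<tau> D)" using s1 s2 by (rule psubsetI)
        then show "\<not> dependent_M A ?K (colset E)" using h by blast
      qed
    qed
    finally show ?thesis .
  qed
  have "colset (\<tau> D) \<subseteq> colset (\<tau> S)" using True unfolding colset_def by blast
  then show ?thesis using sub dep all True unfolding Circ_def circuit_M_def by auto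
qed

lemma circ_ex:
  assumes S: "\<tau> S \<subseteq> Inr ` {..<dim_col A}"
  shows "(\<exists>E. E \<subseteq> univ_S A \<and> (E \<subseteq> \<tau> S \<and> circuit_M A K (colset (\<tau> S)) (colset E)) \<and> Inr x \<in> E \<and> Inr y \<in> E)
    \<longleftrightarrow> (\<exists>C. circuit_M A K (colset (\<tau> S)) C \<and> x \<in> C \<and> y \<in> C)"
proof
  assume "\<exists>E. E \<subseteq> univ_S A \<and> (E \<subseteq> \<tau> S \<and> circuit_M A K (colset (\<tau> S)) (colset E)) \<and> Inr x \<in> E \<and> Inr y \<in> E"
  then obtain E where "circuit_M A K (colset (\<tau> S)) (colset E)" "Inr x \<in> E" "Inr y \<in> E" by blast
  then show "\<exists>C. circuit_M A K (colset (\<tau> S)) C \<and> x \<in> C \<and> y \<in> C" unfolding colset_def by auto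
next
  assume "\<exists>C. circuit_M A K (colset (\<tau> S)) C \<and> x \<in> C \<and> y \<in> C"
  then obtain C where C: "circuit_M A K (colset (\<tau> S)) C" "x \<in> C" "y \<in> C" by blast
  have CS: "C \<subseteq> colset (\<tau> S)" using C(1) unfolding circuit_M_def by blast
  have "Inr ` colset (\<tau> S) = \<tau> S" by (rule Inr_colset[OF S])
  then have "Inr ` C \<subseteq> \<tau> S" using CS by blast
  moreover then have "Inr ` C \<subseteq> univ_S A" using S Inr_univ[of A] by blast
  ultimately show "\<exists>E. E \<subseteq> univ_S A \<and> (E \<subseteq> \<tau> S \<and> circuit_M A K (colset (\<tau> S)) (colset E)) \<and> Inr x \<in> E \<and> Inr y \<in> E"
    using C by (intro exI[of _ "Inr ` C"]) auto
qed

lemma sat_Circ_upd: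
  assumes Sn: "S < n" and vbn: "vb Vs n" and S: "\<tau> S \<subseteq> Inr ` {..<dim_col A}"
    and EU: "E \<subseteq> univ_S A" and es: "encs A \<tau> Vs vs"
  shows "sat A \<sigma>' (\<tau>(n:=E)) (Circ n S Vs (Suc n)) \<longleftrightarrow>
    E \<subseteq> \<tau> S \<and> circuit_M A (Kof (dim_row A) vs) (colset (\<tau> S)) (colset E)"
proof -
  have "encs A (\<tau>(n:=E)) Vs vs" using encs_frame[OF vbn, of "\<tau>(n:=E)" \<tau>] es by simp
  then show ?thesis using sat_Circ[of n "Suc n" S Vs "\<tau>(n:=E)" A vs \<sigma>'] Sn S EU vb_mono[OF vbn] by simp
qed

definition Conn :: "nat \<Rightarrow> ('f \<Rightarrow> nat) list \<Rightarrow> nat \<Rightarrow> 'f cmso" where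
  "Conn S Vs n = cAll1 n (cAll1 (Suc n) (cImp (Conj (Mem n S) (Conj (Mem (Suc n) S) (Neg (Eq n (Suc n)))))
      (Ex2 n (Conj (Circ n S Vs (Suc n)) (Conj (Mem n n) (Mem (Suc n) n))))))"

lemma sat_Conn:
  assumes Sn: "S < n" and vbn: "vb Vs n" and S: "\<tau> S \<subseteq> Inr ` {..<dim_col A}" and es: "encs A \<tau> Vs vs"
  shows "sat A \<sigma> \<tau> (Conn S Vs n) \<longleftrightarrow> connected_M A (Kof (dim_row A) vs) (colset (\<tau> S))"
proof -
  let ?K = "Kof (dim_row A) vs"
  have Sne: "S \<noteq> n" using Sn by simp
  have "sat A \<sigma> \<tau> (Conn S Vs n) \<longleftrightarrow> (\<forall>e1\<in>univ_S A. \<forall>e2\<in>univ_S A. e1 \<in> \<tau> S \<and> e2 \<in> \<tau> S \<and> e1 \<noteq> e2 \<longrightarrow>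
      (\<exists>E. E \<subseteq> univ_S A \<and> (E \<subseteq> \<tau> S \<and> circuit_M A ?K (colset (\<tau> S)) (colset E)) \<and> e1 \<in> E \<and> e2 \<in> E))"
    unfolding Conn_def using sat_Circ_upd[OF Sn vbn S _ es] Sne by (simp cong: conj_cong)
  also have "\<dots> \<longleftrightarrow> connected_M A ?K (colset (\<tau> S))"
  proof
    assume h: "\<forall>e1\<in>univ_S A. \<forall>e2\<in>univ_S A. e1 \<in> \<tau> S \<and> e2 \<in> \<tau> S \<and> e1 \<noteq> e2 \<longrightarrow>
      (\<exists>E. E \<subseteq> univ_S A \<and> (E \<subseteq> \<tau> S \<and> circuit_M A ?K (colset (\<tau> S)) (colset E)) \<and> e1 \<in> E \<and> e2 \<in> E)"
    show "connected_M A ?K (colset (\<tau> S))" unfolding connected_M_def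
    proof (intro ballI impI)
      fix x y assume xy: "x \<in> colset (\<tau> S)" "y \<in> colset (\<tau> S)" "x \<noteq> y"
      then have "Inr x \<in> \<tau> S" "Inr y \<in> \<tau> S" unfolding colset_def by auto
      moreover then have "Inr x \<in> univ_S A" "Inr y \<in> univ_S A" using S Inr_univ[of A] by blast+
      ultimately show "\<exists>C. circuit_M A ?K (colset (\<tau> S)) C \<and> x \<in> C \<and> y \<in> C"
        using h xy(3) circ_ex[where \<tau>=\<tau> and S=S and A=A and K="?K" and x=x and y=y, OF S] by auto
    qed
  next
    assume h: "connected_M A ?K (colset (\<tau> S))"
    show "\<forall>e1\<in>univ_S A. \<forall>e2\<in>univ_S A. e1 \<in> \<tau> S \<and> e2 \<in> \<tau> S \<and> e1 \<noteq> e2 \<longrightarrow>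
      (\<exists>E. E \<subseteq> univ_S A \<and> (E \<subseteq> \<tau> S \<and> circuit_M A ?K (colset (\<tau> S)) (colset E)) \<and> e1 \<in> E \<and> e2 \<in> E)"
    proof (intro ballI impI)
      fix e1 e2 assume e: "e1 \<in> univ_S A" "e2 \<in> univ_S A" "e1 \<in> \<tau> S \<and> e2 \<in> \<tau> S \<and> e1 \<noteq> e2"
      obtain x where x: "e1 = Inr x" "x \<in> colset (\<tau> S)" using inr_obtain[of e1 "\<tau> S"] e(3) S by blast
      obtain y where y: "e2 = Inr y" "y \<in> colset (\<tau> S)" using inr_obtain[of e2 "\<tau> S"] e(3) S by blast
      have xy: "e1 = Inr x" "e2 = Inr y" "x \<in> colset (\<tau> S)" "y \<in> colset (\<tau> S)" "x \<noteq> y"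
        using x y e(3) by auto
      then have "\<exists>C. circuit_M A ?K (colset (\<tau> S)) C \<and> x \<in> C \<and> y \<in> C" using h unfolding connected_M_def by blast
      then show "\<exists>E. E \<subseteq> univ_S A \<and> (E \<subseteq> \<tau> S \<and> circuit_M A ?K (colset (\<tau> S)) (colset E)) \<and> e1 \<in> E \<and> e2 \<in> E"
        using circ_ex[where \<tau>=\<tau> and S=S and A=A and K="?K" and x=x and y=y, OF S] xy by simp
    qed
  qed
  finally show ?thesis .
qed

definition Comp :: "nat \<Rightarrow> nat \<Rightarrow> ('f \<Rightarrow> nat) list \<Rightarrow> nat \<Rightarrow> 'f cmso" where
  "Comp C S Vs n = Ex1 n (Conj (Mem n S) (cAll1 (Suc n) (cIff (Mem (Suc n) C) (Conj (Mem (Suc n) S)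
      (cOr (Eq n (Suc n)) (Ex2 n (Conj (Circ n S Vs (Suc n)) (Conj (Mem n n) (Mem (Suc n) n)))))))))"

lemma sat_Comp:
  assumes Cn: "C < n" and Sn: "S < n" and vbn: "vb Vs n" and S: "\<tau> S \<subseteq> Inr ` {..<dim_col A}"
    and CU: "\<tau> C \<subseteq> univ_S A" and es: "encs A \<tau> Vs vs"
  shows "sat A \<sigma> \<tau> (Comp C S Vs n) \<longleftrightarrow>
    (\<exists>Cs\<in>components_M A (Kof (dim_row A) vs) (colset (\<tau> S)). \<tau> C = Inr ` Cs)"
proof -
  let ?K = "Kof (dim_row A) vs"
  let ?CS = "colset (\<tau> S)"
  define N where "N x = {y\<in>?CS. x = y \<or> (\<exists>D. circuit_M A ?K ?CS D \<and> x \<in> D \<and> y \<in> D)}" for x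
  have Sne: "S \<noteq> n" "C \<noteq> n" using Sn Cn by auto
  have "sat A \<sigma> \<tau> (Comp C S Vs n) \<longleftrightarrow> (\<exists>e0\<in>univ_S A. e0 \<in> \<tau> S \<and> (\<forall>e\<in>univ_S A. e \<in> \<tau> C \<longleftrightarrow>
      (e \<in> \<tau> S \<and> (e0 = e \<or> (\<exists>E. E \<subseteq> univ_S A \<and> (E \<subseteq> \<tau> S \<and> circuit_M A ?K ?CS (colset E)) \<and> e0 \<in> E \<and> e \<in> E)))))"
    unfolding Comp_def using sat_Circ_upd[OF Sn vbn S _ es] Sne by (simp cong: conj_cong)
  also have "\<dots> \<longleftrightarrow> (\<exists>x\<in>?CS. \<tau> C = Inr ` N x)"
  proof
    assume "\<exists>e0\<in>univ_S A. e0 \<in> \<tau> S \<and> (\<forall>e\<in>univ_S A. e \<in> \<tau> C \<longleftrightarrow>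
      (e \<in> \<tau> S \<and> (e0 = e \<or> (\<exists>E. E \<subseteq> univ_S A \<and> (E \<subseteq> \<tau> S \<and> circuit_M A ?K ?CS (colset E)) \<and> e0 \<in> E \<and> e \<in> E))))"
    then obtain e0 where e0: "e0 \<in> univ_S A" "e0 \<in> \<tau> S" and h: "\<forall>e\<in>univ_S A. e \<in> \<tau> C \<longleftrightarrow>
      (e \<in> \<tau> S \<and> (e0 = e \<or> (\<exists>E. E \<subseteq> univ_S A \<and> (E \<subseteq> \<tau> S \<and> circuit_M A ?K ?CS (colset E)) \<and> e0 \<in> E \<and> e \<in> E)))"
      by blast
    obtain x where x: "e0 = Inr x" "x \<in> ?CS" using e0(2) S unfolding colset_def by auto
    have "\<tau> C = Inr ` N x"
    proof (intro equalityI subsetI)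
      fix e assume e: "e \<in> \<tau> C"
      then have eU: "e \<in> univ_S A" using CU by blast
      then have "e \<in> \<tau> S" and d: "e0 = e \<or> (\<exists>E. E \<subseteq> univ_S A \<and> (E \<subseteq> \<tau> S \<and> circuit_M A ?K ?CS (colset E)) \<and> e0 \<in> E \<and> e \<in> E)"
        using h e by auto
      then obtain y where y: "e = Inr y" "y \<in> ?CS" using inr_obtain[of e "\<tau> S"] S by blast
      have "x = y \<or> (\<exists>D. circuit_M A ?K ?CS D \<and> x \<in> D \<and> y \<in> D)"
        using d circ_ex[where \<tau>=\<tau> and S=S and A=A and K="?K" and x=x and y=y, OF S] x(1) y(1) by auto
      then show "e \<in> Inr ` N x" using y unfolding N_def by auto
    next
      fix e :: "nat + nat" assume "e \<in> Inr ` N x"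
      then obtain y where y: "e = Inr y" "y \<in> ?CS" "x = y \<or> (\<exists>D. circuit_M A ?K ?CS D \<and> x \<in> D \<and> y \<in> D)"
        unfolding N_def by auto
      have eS: "e \<in> \<tau> S" using y(1,2) unfolding colset_def by simp
      then have eU: "e \<in> univ_S A" using S Inr_univ[of A] by blast
      have "e0 = e \<or> (\<exists>E. E \<subseteq> univ_S A \<and> (E \<subseteq> \<tau> S \<and> circuit_M A ?K ?CS (colset E)) \<and> e0 \<in> E \<and> e \<in> E)"
        using y(3) circ_ex[where \<tau>=\<tau> and S=S and A=A and K="?K" and x=x and y=y, OF S] x(1) y(1) by auto
      then show "e \<in> \<tau> C" using h eU eS by blast
    qed
    then show "\<exists>x\<in>?CS. \<tau> C = Inr ` N x" using x by blast
  next
    assume "\<exists>x\<in>?CS. \<tau> C = Inr ` N x"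
    then obtain x where x: "x \<in> ?CS" "\<tau> C = Inr ` N x" by blast
    have xS: "Inr x \<in> \<tau> S" using x(1) unfolding colset_def by simp
    then have xU: "Inr x \<in> univ_S A" using S Inr_univ[of A] by blast
    have "\<forall>e\<in>univ_S A. e \<in> \<tau> C \<longleftrightarrow>
      (e \<in> \<tau> S \<and> (Inr x = e \<or> (\<exists>E. E \<subseteq> univ_S A \<and> (E \<subseteq> \<tau> S \<and> circuit_M A ?K ?CS (colset E)) \<and> Inr x \<in> E \<and> e \<in> E)))"
    proof
      fix e assume eU: "e \<in> univ_S A"
      show "e \<in> \<tau> C \<longleftrightarrow>
        (e \<in> \<tau> S \<and> (Inr x = e \<or> (\<exists>E. E \<subseteq> univ_S A \<and> (E \<subseteq> \<tau> S \<and> circuit_M A ?K ?CS (colset E)) \<and> Inr x \<in> E \<and> e \<in> E)))"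
      proof (cases "e \<in> \<tau> S")
        case False
        moreover have "\<tau> C \<subseteq> \<tau> S" using x(2) Inr_colset[OF S] unfolding N_def by auto
        ultimately show ?thesis by blast
      next
        case True
        then obtain y where y: "e = Inr y" "y \<in> ?CS" using inr_obtain[of e "\<tau> S"] S by blast
        show ?thesis using circ_ex[where \<tau>=\<tau> and S=S and A=A and K="?K" and x=x and y=y, OF S] y True x(2) unfolding N_def by auto
      qed
    qed
    then show "\<exists>e0\<in>univ_S A. e0 \<in> \<tau> S \<and> (\<forall>e\<in>univ_S A. e \<in> \<tau> C \<longleftrightarrow>
      (e \<in> \<tau> S \<and> (e0 = e \<or> (\<exists>E. E \<subseteq> univ_S A \<and> (E \<subseteq> \<tau> S \<and> circuit_M A ?K ?CS (colset E)) \<and> e0 \<in> E \<and> e \<in> E))))"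
      using xU xS by blast
  qed
  also have "\<dots> \<longleftrightarrow> (\<exists>Cs\<in>components_M A ?K ?CS. \<tau> C = Inr ` Cs)"
    unfolding components_M_def N_def by blast
  finally show ?thesis .
qed

definition Rank0 :: "nat \<Rightarrow> ('f \<Rightarrow> nat) list \<Rightarrow> nat \<Rightarrow> 'f cmso" where
  "Rank0 S Vs n = cAll1 n (cImp (Mem n S) (Ex2 n (Conj (cAll1 (Suc n) (cIff (Mem (Suc n) n) (Eq (Suc n) n)))
      (Dep n Vs (Suc n)))))"

lemma sat_Rank0:
  assumes Sn: "S < n" and vbn: "vb Vs n" and S: "\<tau> S \<subseteq> Inr ` {..<dim_col A}" and es: "encs A \<tau> Vs vs"
  shows "sat A \<sigma> \<tau> (Rank0 S Vs n) \<longleftrightarrow> (\<forall>c\<in>colset (\<tau> S). dependent_M A (Kof (dim_row A) vs) {c})"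
proof -
  let ?K = "Kof (dim_row A) vs"
  have Sne: "S \<noteq> n" using Sn by simp
  have dep: "sat A \<sigma>' (\<tau>(n:=E)) (Dep n Vs (Suc n)) \<longleftrightarrow> dependent_M A ?K (colset E)"
    if "E \<subseteq> Inr ` {..<dim_col A}" for E \<sigma>'
  proof -
    have "encs A (\<tau>(n:=E)) Vs vs" using encs_frame[OF vbn, of "\<tau>(n:=E)" \<tau>] es by simp
    then show ?thesis using sat_Dep[of n "Suc n" Vs "\<tau>(n:=E)" A vs \<sigma>'] that vb_mono[OF vbn] by simp
  qed
  have one: "(\<exists>E. E \<subseteq> univ_S A \<and> (\<forall>e'\<in>univ_S A. e' \<in> E \<longleftrightarrow> e' = Inr c) \<and> sat A (\<sigma>(n:=Inr c)) (\<tau>(n:=E)) (Dep n Vs (Suc n)))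
      \<longleftrightarrow> dependent_M A ?K {c}" if c: "c < dim_col A" for c
  proof -
    have cU: "Inr c \<in> univ_S A" using c unfolding univ_S_def by auto
    have eq: "(E \<subseteq> univ_S A \<and> (\<forall>e'\<in>univ_S A. e' \<in> E \<longleftrightarrow> e' = Inr c)) \<longleftrightarrow> E = {Inr c}" for E
      using cU by blast
    have d: "sat A (\<sigma>(n:=Inr c)) (\<tau>(n:={Inr c})) (Dep n Vs (Suc n)) \<longleftrightarrow> dependent_M A ?K {c}"
      using dep[of "{Inr c}"] c colset_Inr[of "{c}"] by simp
    show ?thesis
    proof
      assume "\<exists>E. E \<subseteq> univ_S A \<and> (\<forall>e'\<in>univ_S A. e' \<in> E \<longleftrightarrow> e' = Inr c) \<and> sat A (\<sigma>(n:=Inr c)) (\<tau>(n:=E)) (Dep n Vs (Suc n))"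
      then obtain E where E: "E \<subseteq> univ_S A" "\<forall>e'\<in>univ_S A. e' \<in> E \<longleftrightarrow> e' = Inr c" "sat A (\<sigma>(n:=Inr c)) (\<tau>(n:=E)) (Dep n Vs (Suc n))"
        by blast
      have "E = {Inr c}" using eq E(1,2) by blast
      then show "dependent_M A ?K {c}" using E(3) d by simp
    next
      assume "dependent_M A ?K {c}"
      then have "sat A (\<sigma>(n:=Inr c)) (\<tau>(n:={Inr c})) (Dep n Vs (Suc n))" using d by simp
      moreover have "{Inr c} \<subseteq> univ_S A \<and> (\<forall>e'\<in>univ_S A. e' \<in> {Inr c} \<longleftrightarrow> e' = Inr c)" using eq by blast
      ultimately show "\<exists>E. E \<subseteq> univ_S A \<and> (\<forall>e'\<in>univ_S A. e' \<in> E \<longleftrightarrow> e' = Inr c) \<and> sat A (\<sigma>(n:=Inr c)) (\<tau>(n:=E)) (Dep n Vs (Suc n))"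
        by blast
    qed
  qed
  have "sat A \<sigma> \<tau> (Rank0 S Vs n) \<longleftrightarrow> (\<forall>e\<in>univ_S A. e \<in> \<tau> S \<longrightarrow>
      (\<exists>E. E \<subseteq> univ_S A \<and> (\<forall>e'\<in>univ_S A. e' \<in> E \<longleftrightarrow> e' = e) \<and> sat A (\<sigma>(n:=e)) (\<tau>(n:=E)) (Dep n Vs (Suc n))))"
    unfolding Rank0_def using Sne by simp
  also have "\<dots> \<longleftrightarrow> (\<forall>c\<in>colset (\<tau> S). dependent_M A ?K {c})"
  proof
    assume h: "\<forall>e\<in>univ_S A. e \<in> \<tau> S \<longrightarrow>
      (\<exists>E. E \<subseteq> univ_S A \<and> (\<forall>e'\<in>univ_S A. e' \<in> E \<longleftrightarrow> e' = e) \<and> sat A (\<sigma>(n:=e)) (\<tau>(n:=E)) (Dep n Vs (Suc n)))"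
    show "\<forall>c\<in>colset (\<tau> S). dependent_M A ?K {c}"
    proof
      fix c assume "c \<in> colset (\<tau> S)"
      then have c: "Inr c \<in> \<tau> S" "c < dim_col A" using colset_sub[OF S] unfolding colset_def by auto
      then have "Inr c \<in> univ_S A" unfolding univ_S_def by auto
      then show "dependent_M A ?K {c}" using h c one[OF c(2)] by blast
    qed
  next
    assume h: "\<forall>c\<in>colset (\<tau> S). dependent_M A ?K {c}"
    show "\<forall>e\<in>univ_S A. e \<in> \<tau> S \<longrightarrow>
      (\<exists>E. E \<subseteq> univ_S A \<and> (\<forall>e'\<in>univ_S A. e' \<in> E \<longleftrightarrow> e' = e) \<and> sat A (\<sigma>(n:=e)) (\<tau>(n:=E)) (Dep n Vs (Suc n)))"
    proof (intro ballI impI)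
      fix e assume "e \<in> univ_S A" "e \<in> \<tau> S"
      then obtain c where c: "e = Inr c" "c \<in> colset (\<tau> S)" "c \<in> {..<dim_col A}" using inr_obtain[of e "\<tau> S"] S by blast
      then have "c < dim_col A" by simp
      show "\<exists>E. E \<subseteq> univ_S A \<and> (\<forall>e'\<in>univ_S A. e' \<in> E \<longleftrightarrow> e' = e) \<and> sat A (\<sigma>(n:=e)) (\<tau>(n:=E)) (Dep n Vs (Suc n))"
        using one[OF \<open>c < dim_col A\<close>] h c by blast
    qed
  qed
  finally show ?thesis .
qed

end

lemma sat_Neg: "sat A \<sigma> \<tau> (Neg p) \<longleftrightarrow> \<not> sat A \<sigma> \<tau> p" by simp

context fx begin

definition stepsem :: "'f mat \<Rightarrow> 'f vec list \<Rightarrow> nat set \<Rightarrow> nat \<Rightarrow> bool" where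
  "stepsem A vs X d \<longleftrightarrow> (\<exists>d' v. d = Suc d' \<and> v \<in> carrier_vec (dim_row A) \<and> csd_le A (Kof (dim_row A) (vs@[v])) X d')"

definition body :: "(nat \<Rightarrow> nat \<Rightarrow> 'f cmso) \<Rightarrow> nat \<Rightarrow> ('f \<Rightarrow> nat) list \<Rightarrow> nat \<Rightarrow> 'f cmso" where
  "body stp S Vs n = cOr (Rank0 S Vs n) (cOr (Conj (Neg (Conn S Vs n))
     (cAll2 n (cImp (Comp n S Vs (Suc n)) (cOr (Rank0 n Vs (Suc n)) (stp n (Suc n))))))
     (Conj (Conn S Vs n) (stp S n)))"

lemma sat_body:
  assumes Sn: "S < n" and vbn: "vb Vs n" and S: "\<tau> S \<subseteq> Inr ` {..<dim_col A}" and es: "encs A \<tau> Vs vs"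
    and stp: "\<And>X b \<sigma>' \<tau>'. X < b \<Longrightarrow> vb Vs b \<Longrightarrow> \<tau>' X \<subseteq> Inr ` {..<dim_col A} \<Longrightarrow> encs A \<tau>' Vs vs \<Longrightarrow>
        sat A \<sigma>' \<tau>' (stp X b) \<longleftrightarrow> stepsem A vs (colset (\<tau>' X)) d"
  shows "sat A \<sigma> \<tau> (body stp S Vs n) \<longleftrightarrow> csd_le A (Kof (dim_row A) vs) (colset (\<tau> S)) d"
proof -
  let ?K = "Kof (dim_row A) vs"
  let ?CS = "colset (\<tau> S)"
  have CS: "?CS \<subseteq> {..<dim_col A}" by (rule colset_sub[OF S])
  have r0: "sat A \<sigma> \<tau> (Rank0 S Vs n) \<longleftrightarrow> (\<forall>c\<in>?CS. dependent_M A ?K {c})" by (rule sat_Rank0[OF Sn vbn S es])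
  have cn: "sat A \<sigma> \<tau> (Conn S Vs n) \<longleftrightarrow> connected_M A ?K ?CS" by (rule sat_Conn[OF Sn vbn S es])
  have st: "sat A \<sigma> \<tau> (stp S n) \<longleftrightarrow> stepsem A vs ?CS d" by (rule stp[OF Sn vbn S es])
  have Sne: "S \<noteq> n" using Sn by simp
  have esE: "encs A (\<tau>(n:=E)) Vs vs" for E using encs_frame[OF vbn, of "\<tau>(n:=E)" \<tau>] es by simp
  have vbS: "vb Vs (Suc n)" using vb_mono[OF vbn] by simp
  have cE: "sat A \<sigma> (\<tau>(n:=E)) (Comp n S Vs (Suc n)) \<longleftrightarrow> (\<exists>Cs\<in>components_M A ?K ?CS. E = Inr ` Cs)"
    if "E \<subseteq> univ_S A" for E
    using sat_Comp[of n "Suc n" S Vs "\<tau>(n:=E)" A vs \<sigma>] that Sn vbS S esE Sne by simp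
  have rE: "sat A \<sigma> (\<tau>(n:=Inr ` Cs)) (Rank0 n Vs (Suc n)) \<longleftrightarrow> (\<forall>c\<in>Cs. dependent_M A ?K {c})"
    if "Cs \<subseteq> {..<dim_col A}" for Cs
    using sat_Rank0[of n "Suc n" Vs "\<tau>(n:=Inr ` Cs)" A vs \<sigma>] that vbS esE by (simp add: image_mono)
  have sE: "sat A \<sigma> (\<tau>(n:=Inr ` Cs)) (stp n (Suc n)) \<longleftrightarrow> stepsem A vs Cs d"
    if "Cs \<subseteq> {..<dim_col A}" for Cs
    using stp[of n "Suc n" "\<tau>(n:=Inr ` Cs)" \<sigma>] that vbS esE by (simp add: image_mono)
  have compsub: "Cs \<subseteq> {..<dim_col A}" if "Cs \<in> components_M A ?K ?CS" for Cs
    using comp_sub[OF that] CS by blast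
  have comp: "sat A \<sigma> \<tau> (cAll2 n (cImp (Comp n S Vs (Suc n)) (cOr (Rank0 n Vs (Suc n)) (stp n (Suc n))))) \<longleftrightarrow>
      (\<forall>C\<in>components_M A ?K ?CS. (\<forall>c\<in>C. dependent_M A ?K {c}) \<or> stepsem A vs C d)"
  proof
    assume h: "sat A \<sigma> \<tau> (cAll2 n (cImp (Comp n S Vs (Suc n)) (cOr (Rank0 n Vs (Suc n)) (stp n (Suc n)))))"
    show "\<forall>C\<in>components_M A ?K ?CS. (\<forall>c\<in>C. dependent_M A ?K {c}) \<or> stepsem A vs C d"
    proof
      fix C assume C: "C \<in> components_M A ?K ?CS"
      have U: "Inr ` C \<subseteq> univ_S A" using compsub[OF C] Inr_univ[of A] by blast
      have "sat A \<sigma> (\<tau>(n:=Inr ` C)) (Comp n S Vs (Suc n))" using cE[OF U] C by blast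
      then have "sat A \<sigma> (\<tau>(n:=Inr ` C)) (Rank0 n Vs (Suc n)) \<or> sat A \<sigma> (\<tau>(n:=Inr ` C)) (stp n (Suc n))"
        using h U by simp
      then show "(\<forall>c\<in>C. dependent_M A ?K {c}) \<or> stepsem A vs C d"
        using rE[OF compsub[OF C]] sE[OF compsub[OF C]] by simp
    qed
  next
    assume h: "\<forall>C\<in>components_M A ?K ?CS. (\<forall>c\<in>C. dependent_M A ?K {c}) \<or> stepsem A vs C d"
    have "sat A \<sigma> (\<tau>(n:=E)) (Rank0 n Vs (Suc n)) \<or> sat A \<sigma> (\<tau>(n:=E)) (stp n (Suc n))"
      if E: "E \<subseteq> univ_S A" "sat A \<sigma> (\<tau>(n:=E)) (Comp n S Vs (Suc n))" for E
    proof -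
      obtain Cs where Cs: "Cs \<in> components_M A ?K ?CS" "E = Inr ` Cs" using cE[OF E(1)] E(2) by blast
      show ?thesis using h Cs rE[OF compsub[OF Cs(1)]] sE[OF compsub[OF Cs(1)]] by simp
    qed
    then show "sat A \<sigma> \<tau> (cAll2 n (cImp (Comp n S Vs (Suc n)) (cOr (Rank0 n Vs (Suc n)) (stp n (Suc n)))))"
      by simp
  qed
  have "sat A \<sigma> \<tau> (body stp S Vs n) \<longleftrightarrow>
      (\<forall>c\<in>?CS. dependent_M A ?K {c}) \<or>
      (\<not> connected_M A ?K ?CS \<and> (\<forall>C\<in>components_M A ?K ?CS. (\<forall>c\<in>C. dependent_M A ?K {c}) \<or> stepsem A vs C d)) \<or>
      (connected_M A ?K ?CS \<and> stepsem A vs ?CS d)"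
    unfolding body_def sat_cOr sat_Conj sat_Neg r0 cn st comp ..
  also have "\<dots> \<longleftrightarrow> csd_le A ?K ?CS d"
    unfolding stepsem_def by (rule csd_char[OF CS, symmetric])
  finally show ?thesis .
qed

fun Psi :: "nat \<Rightarrow> nat \<Rightarrow> ('f \<Rightarrow> nat) list \<Rightarrow> nat \<Rightarrow> 'f cmso" where
  "Psi 0 S Vs n = body (\<lambda>_ _. cFF) S Vs n"
| "Psi (Suc d) S Vs n = body (\<lambda>X b. ExV b (Conj (cAll1 b (cImp (RowP b) (Unique b (vmap b))))
      (Psi d X (Vs @ [vmap b]) (b + card (UNIV :: 'f set))))) S Vs n"

lemma sat_Psi:
  "S < n \<Longrightarrow> vb Vs n \<Longrightarrow> \<tau> S \<subseteq> Inr ` {..<dim_col A} \<Longrightarrow> encs A \<tau> Vs vs \<Longrightarrow>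
   sat A \<sigma> \<tau> (Psi d S Vs n) \<longleftrightarrow> csd_le A (Kof (dim_row A) vs) (colset (\<tau> S)) d"
proof (induction d arbitrary: S Vs vs n \<sigma> \<tau>)
  case 0
  show ?case unfolding Psi.simps by (rule sat_body) (use 0 in \<open>auto simp: stepsem_def\<close>)
next
  case (Suc d)
  let ?q = "card (UNIV :: 'f set)"
  show ?case unfolding Psi.simps
  proof (rule sat_body[OF Suc.prems])
    fix X b \<sigma>' \<tau>' assume Xb: "X < b" and vbb: "vb Vs b" and X: "\<tau>' X \<subseteq> Inr ` {..<dim_col A}"
      and es': "encs A \<tau>' Vs vs"
    show "sat A \<sigma>' \<tau>' (ExV b (Conj (cAll1 b (cImp (RowP b) (Unique b (vmap b)))) (Psi d X (Vs @ [vmap b]) (b + ?q))))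
      \<longleftrightarrow> stepsem A vs (colset (\<tau>' X)) (Suc d)"
    proof
      assume "sat A \<sigma>' \<tau>' (ExV b (Conj (cAll1 b (cImp (RowP b) (Unique b (vmap b)))) (Psi d X (Vs @ [vmap b]) (b + ?q))))"
      then obtain \<tau>'' where t: "\<forall>Y. Y < b \<or> Y \<ge> b + ?q \<longrightarrow> \<tau>'' Y = \<tau>' Y" "\<forall>\<gamma>. \<tau>'' (vmap b \<gamma>) \<subseteq> univ_S A"
        and u: "\<forall>e\<in>univ_S A. e \<in> Inl ` {..<dim_row A} \<longrightarrow> (\<exists>\<gamma>. e \<in> \<tau>'' (vmap b \<gamma>) \<and> (\<forall>\<gamma>'. \<gamma>' \<noteq> \<gamma> \<longrightarrow> e \<notin> \<tau>'' (vmap b \<gamma>')))"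
        and ps: "sat A \<sigma>' \<tau>'' (Psi d X (Vs @ [vmap b]) (b + ?q))"
        unfolding sat_ExV by (auto simp: sat_Unique)
      define v where "v = vec (dim_row A) (\<lambda>i. THE \<gamma>. Inl i \<in> \<tau>'' (vmap b \<gamma>))"
      have ev: "encv A \<tau>'' (vmap b) v" unfolding encv_def
      proof (intro allI impI)
        fix i \<gamma> assume i: "i < dim_row A"
        have i1: "Inl i \<in> univ_S A" "Inl i \<in> Inl ` {..<dim_row A}" using i unfolding univ_S_def by auto
        have "\<exists>\<gamma>. Inl i \<in> \<tau>'' (vmap b \<gamma>) \<and> (\<forall>\<gamma>'. \<gamma>' \<noteq> \<gamma> \<longrightarrow> Inl i \<notin> \<tau>'' (vmap b \<gamma>'))"
          using u[rule_format, OF i1] .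
        then obtain \<gamma>0 where g: "Inl i \<in> \<tau>'' (vmap b \<gamma>0)" "\<forall>\<gamma>'. \<gamma>' \<noteq> \<gamma>0 \<longrightarrow> Inl i \<notin> \<tau>'' (vmap b \<gamma>')"
          by blast
        have "(THE \<gamma>. Inl i \<in> \<tau>'' (vmap b \<gamma>)) = \<gamma>0" using g by (intro the_equality) auto
        then have v0: "v $ i = \<gamma>0" unfolding v_def using i by simp
        show "(Inl i \<in> \<tau>'' (vmap b \<gamma>)) = (v $ i = \<gamma>)"
        proof
          assume "Inl i \<in> \<tau>'' (vmap b \<gamma>)"
          then have "\<not> \<gamma> \<noteq> \<gamma>0" using g(2) by blast
          then show "v $ i = \<gamma>" using v0 by simp
        next
          assume "v $ i = \<gamma>"
          then show "Inl i \<in> \<tau>'' (vmap b \<gamma>)" using v0 g(1) by simp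
        qed
      qed
      have vc: "v \<in> carrier_vec (dim_row A)" by (simp add: v_def)
      have "encs A \<tau>'' Vs vs" using encs_frame[OF vbb, of \<tau>'' \<tau>'] t(1) es' by auto
      then have es'': "encs A \<tau>'' (Vs@[vmap b]) (vs@[v])" using encs_snoc ev vc by blast
      have vb'': "vb (Vs@[vmap b]) (b + ?q)" unfolding vb_snoc using vb_mono[OF vbb, of "b + ?q"] by simp
      have X'': "\<tau>'' X = \<tau>' X" using t(1) Xb by auto
      have "X < b + ?q" using Xb by simp
      then have "csd_le A (Kof (dim_row A) (vs@[v])) (colset (\<tau>'' X)) d"
        using Suc.IH[of X "b + ?q" "Vs@[vmap b]" \<tau>'' "vs@[v]" \<sigma>'] ps X X'' es'' vb'' by simp
      then show "stepsem A vs (colset (\<tau>' X)) (Suc d)" unfolding stepsem_def using vc X'' by auto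
    next
      assume "stepsem A vs (colset (\<tau>' X)) (Suc d)"
      then obtain v where v: "v \<in> carrier_vec (dim_row A)" "csd_le A (Kof (dim_row A) (vs@[v])) (colset (\<tau>' X)) d"
        unfolding stepsem_def by auto
      define \<tau>'' where "\<tau>'' Y = (if b \<le> Y \<and> Y < b + ?q
          then (Inl :: nat \<Rightarrow> nat + nat) ` {i. i < dim_row A \<and> vmap b (v $ i) = Y} else \<tau>' Y)" for Y
      have t1: "\<forall>Y. Y < b \<or> Y \<ge> b + ?q \<longrightarrow> \<tau>'' Y = \<tau>' Y" unfolding \<tau>''_def by auto
      have tv: "\<tau>'' (vmap b \<gamma>) = Inl ` {i. i < dim_row A \<and> v $ i = \<gamma>}" for \<gamma>
        unfolding \<tau>''_def by simp
      have t2: "\<forall>\<gamma>. \<tau>'' (vmap b \<gamma>) \<subseteq> univ_S A" unfolding tv univ_S_def by auto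
      have ev: "encv A \<tau>'' (vmap b) v" unfolding encv_def tv by auto
      have "encs A \<tau>'' Vs vs" using encs_frame[OF vbb, of \<tau>'' \<tau>'] t1 es' by auto
      then have es'': "encs A \<tau>'' (Vs@[vmap b]) (vs@[v])" using encs_snoc ev v(1) by blast
      have vb'': "vb (Vs@[vmap b]) (b + ?q)" unfolding vb_snoc using vb_mono[OF vbb, of "b + ?q"] by simp
      have X'': "\<tau>'' X = \<tau>' X" using t1 Xb by auto
      have "X < b + ?q" using Xb by simp
      then have ps: "sat A \<sigma>' \<tau>'' (Psi d X (Vs @ [vmap b]) (b + ?q))"
        using Suc.IH[of X "b + ?q" "Vs@[vmap b]" \<tau>'' "vs@[v]" \<sigma>'] v(2) X X'' es'' vb'' by simp
      have u: "\<forall>e\<in>univ_S A. e \<in> Inl ` {..<dim_row A} \<longrightarrow> (\<exists>\<gamma>. e \<in> \<tau>'' (vmap b \<gamma>) \<and> (\<forall>\<gamma>'. \<gamma>' \<noteq> \<gamma> \<longrightarrow> e \<notin> \<tau>'' (vmap b \<gamma>')))"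
      proof (intro ballI impI)
        fix e assume "e \<in> univ_S A" "e \<in> Inl ` {..<dim_row A}"
        then obtain i where i: "e = Inl i" "i < dim_row A" by auto
        show "\<exists>\<gamma>. e \<in> \<tau>'' (vmap b \<gamma>) \<and> (\<forall>\<gamma>'. \<gamma>' \<noteq> \<gamma> \<longrightarrow> e \<notin> \<tau>'' (vmap b \<gamma>'))"
          using i unfolding tv by (intro exI[of _ "v $ i"]) auto
      qed
      show "sat A \<sigma>' \<tau>' (ExV b (Conj (cAll1 b (cImp (RowP b) (Unique b (vmap b)))) (Psi d X (Vs @ [vmap b]) (b + ?q))))"
        unfolding sat_ExV using t1 t2 u ps by (auto simp: sat_Unique intro!: exI[of _ \<tau>''])
    qed
  qed
qed

definition top :: "nat \<Rightarrow> 'f cmso" where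
  "top d = Ex2 0 (Conj (cAll1 0 (cIff (Mem 0 0) (ColP 0))) (Psi d 0 [] 1))"

lemma models_top: "models A (top d) \<longleftrightarrow> csd_matroid A \<le> d"
proof -
  let ?E = "(Inr :: nat \<Rightarrow> nat + nat) ` {..<dim_col A}"
  have ps: "sat A \<sigma> (\<tau>(0:=?E)) (Psi d 0 [] 1) \<longleftrightarrow> csd_le A {0\<^sub>v (dim_row A)} {..<dim_col A} d" for \<sigma> \<tau>
    using sat_Psi[of 0 1 "[]" "\<tau>(0:=?E)" A "[]" \<sigma> d] by (simp add: vb_Nil encs_Nil Kof_Nil)
  have "models A (top d) \<longleftrightarrow> (\<exists>E. E \<subseteq> univ_S A \<and> (\<forall>e\<in>univ_S A. e \<in> E \<longleftrightarrow> e \<in> ?E) \<and>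
      sat A (\<lambda>_. Inl 0) ((\<lambda>_. {})(0:=E)) (Psi d 0 [] 1))"
    unfolding models_def top_def by simp
  also have "\<dots> \<longleftrightarrow> csd_le A {0\<^sub>v (dim_row A)} {..<dim_col A} d"
  proof
    assume "\<exists>E. E \<subseteq> univ_S A \<and> (\<forall>e\<in>univ_S A. e \<in> E \<longleftrightarrow> e \<in> ?E) \<and> sat A (\<lambda>_. Inl 0) ((\<lambda>_. {})(0:=E)) (Psi d 0 [] 1)"
    then obtain E where E: "E \<subseteq> univ_S A" "\<forall>e\<in>univ_S A. e \<in> E \<longleftrightarrow> e \<in> ?E" "sat A (\<lambda>_. Inl 0) ((\<lambda>_. {})(0:=E)) (Psi d 0 [] 1)"
      by blast
    have "E = ?E" using E(1,2) Inr_univ[of A] by blast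
    then show "csd_le A {0\<^sub>v (dim_row A)} {..<dim_col A} d" using E(3) ps by simp
  next
    assume "csd_le A {0\<^sub>v (dim_row A)} {..<dim_col A} d"
    then have "sat A (\<lambda>_. Inl 0) ((\<lambda>_. {})(0:=?E)) (Psi d 0 [] 1)" using ps by simp
    then show "\<exists>E. E \<subseteq> univ_S A \<and> (\<forall>e\<in>univ_S A. e \<in> E \<longleftrightarrow> e \<in> ?E) \<and> sat A (\<lambda>_. Inl 0) ((\<lambda>_. {})(0:=E)) (Psi d 0 [] 1)"
      using Inr_univ[of A] by blast
  qed
  also have "\<dots> \<longleftrightarrow> csd_matroid A \<le> d" by (rule csd_matroid_iff[symmetric])
  finally show ?thesis .
qed

end

lemma fv_conn[simp]:
  "fv1 (cOr p q) = fv1 p \<union> fv1 q" "fv2 (cOr p q) = fv2 p \<union> fv2 q"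
  "fv1 (cImp p q) = fv1 p \<union> fv1 q" "fv2 (cImp p q) = fv2 p \<union> fv2 q"
  "fv1 (cIff p q) = fv1 p \<union> fv1 q" "fv2 (cIff p q) = fv2 p \<union> fv2 q"
  "fv1 (cAll1 x p) = fv1 p - {x}" "fv2 (cAll1 x p) = fv2 p"
  "fv1 (cAll2 X p) = fv1 p" "fv2 (cAll2 X p) = fv2 p - {X}"
  "fv1 cTT = {}" "fv2 cTT = {}" "fv1 cFF = {}" "fv2 cFF = {}"
  by (auto simp: cOr_def cImp_def cIff_def cAll1_def cAll2_def cFF_def cTT_def)

lemma fv_bigOr: "fv1 (bigOr ps) = (\<Union>p\<in>set ps. fv1 p)" "fv2 (bigOr ps) = (\<Union>p\<in>set ps. fv2 p)"
  by (induction ps) auto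
lemma fv_bigAnd: "fv1 (bigAnd ps) = (\<Union>p\<in>set ps. fv1 p)" "fv2 (bigAnd ps) = (\<Union>p\<in>set ps. fv2 p)"
  by (induction ps) auto

lemma fv_OrS[simp]: "finite S \<Longrightarrow> fv1 (OrS S f) = (\<Union>s\<in>S. fv1 (f s))" "finite S \<Longrightarrow> fv2 (OrS S f) = (\<Union>s\<in>S. fv2 (f s))"
  by (simp_all add: OrS_def fv_bigOr set_lst)
lemma fv_AndS[simp]: "finite S \<Longrightarrow> fv1 (AndS S f) = (\<Union>s\<in>S. fv1 (f s))" "finite S \<Longrightarrow> fv2 (AndS S f) = (\<Union>s\<in>S. fv2 (f s))"
  by (simp_all add: AndS_def fv_bigAnd set_lst)

lemma fv_foldr_Ex2: "fv1 (foldr Ex2 xs p) = fv1 p" "fv2 (foldr Ex2 xs p) = fv2 p - set xs"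
  by (induction xs) auto

definition VV :: "('f \<Rightarrow> nat) list \<Rightarrow> nat set" where "VV Vs = {X. \<exists>j<length Vs. \<exists>\<gamma>. X = (Vs!j) \<gamma>}"

lemma VV_snoc: "VV (Vs @ [V]) = VV Vs \<union> range V"
proof (intro equalityI subsetI)
  fix X assume "X \<in> VV (Vs@[V])"
  then obtain j \<gamma> where j: "j < Suc (length Vs)" "X = ((Vs@[V])!j) \<gamma>" unfolding VV_def by auto
  show "X \<in> VV Vs \<union> range V"
  proof (cases "j < length Vs")
    case True
    then have "X = (Vs!j) \<gamma>" using j(2) by (simp add: nth_append_left)
    then show ?thesis using True unfolding VV_def by blast
  next
    case False
    then have "j = length Vs" using j(1) by simp
    then show ?thesis using j(2) by simp
  qed
next
  fix X assume "X \<in> VV Vs \<union> range V"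
  then show "X \<in> VV (Vs@[V])"
  proof
    assume "X \<in> VV Vs"
    then obtain j \<gamma> where j: "j < length Vs" "X = (Vs!j) \<gamma>" unfolding VV_def by auto
    then have "X = ((Vs@[V])!j) \<gamma>" by (simp add: nth_append_left)
    moreover have "j < length (Vs@[V])" using j(1) by simp
    ultimately show ?thesis unfolding VV_def by blast
  next
    assume "X \<in> range V"
    then obtain \<gamma> where "X = V \<gamma>" by auto
    then have "X = ((Vs@[V])!(length Vs)) \<gamma>" by simp
    moreover have "length Vs < length (Vs@[V])" by simp
    ultimately show ?thesis unfolding VV_def by blast
  qed
qed

lemma VV_Nil: "VV [] = {}" unfolding VV_def by simp

context fx begin

lemma fv_ExV: "fv1 (ExV n \<phi>) = fv1 \<phi>" "fv2 (ExV n \<phi>) \<subseteq> fv2 \<phi> - range (vmap n)"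
  unfolding ExV_def fv_foldr_Ex2 by (auto simp: set_lst)

lemma fv_Unique: "fv1 (Unique x V) = {x}" "fv2 (Unique x V) \<subseteq> range V"
  unfolding Unique_def by auto

lemma fv_SumIs: "fv1 (SumIs x T Al \<delta> n) \<subseteq> {x}" "fv2 (SumIs x T Al \<delta> n) \<subseteq> insert T (range Al)"
  unfolding SumIs_def fv_OrS[OF finite_R] fv_AndS[OF finite_UNIV] by auto

lemma VV_mem[simp]: "j < length Vs \<Longrightarrow> (Vs!j) \<gamma> \<in> VV Vs"
  unfolding VV_def by blast

lemma fv_RowEq: "fv1 (RowEq x T Al Vs \<beta> n) \<subseteq> {x}" "fv2 (RowEq x T Al Vs \<beta> n) \<subseteq> insert T (range Al) \<union> VV Vs"
  unfolding RowEq_def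
  by (auto simp: finite_lists_len dest: subsetD[OF fv_SumIs(1)] subsetD[OF fv_SumIs(2)])

lemma fv_InSpan: "fv1 (InSpan T Al Vs n) = {}" "fv2 (InSpan T Al Vs n) \<subseteq> insert T (range Al) \<union> VV Vs"
  unfolding InSpan_def
  by (auto simp: finite_lists_len dest: subsetD[OF fv_RowEq(1)] subsetD[OF fv_RowEq(2)])

lemma fv_Dep: "fv1 (Dep T Vs n) = {}" "fv2 (Dep T Vs n) \<subseteq> insert T (VV Vs)"
proof -
  show "fv1 (Dep T Vs n) = {}" unfolding Dep_def fv_ExV
    by (auto simp: fv_Unique fv_InSpan)
  have "fv2 (Dep T Vs n) \<subseteq> (insert T (range (vmap n)) \<union> VV Vs) - range (vmap n)"
    unfolding Dep_def
    by (rule order.trans[OF fv_ExV(2)]) (auto dest: subsetD[OF fv_InSpan(2)] subsetD[OF fv_Unique(2)])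
  then show "fv2 (Dep T Vs n) \<subseteq> insert T (VV Vs)" by blast
qed

lemma fv_Sub: "fv1 (Sub X Y n) = {}" "fv2 (Sub X Y n) = {X, Y}"
  unfolding Sub_def by auto
lemma fv_SetEq: "fv1 (SetEq X Y n) = {}" "fv2 (SetEq X Y n) = {X, Y}"
  unfolding SetEq_def by (auto simp: fv_Sub)

lemma fv_Circ: "fv1 (Circ D S Vs n) = {}" "fv2 (Circ D S Vs n) \<subseteq> {D, S} \<union> VV Vs"
  unfolding Circ_def by (auto simp: fv_Sub fv_SetEq fv_Dep(1) dest: subsetD[OF fv_Dep(2)])

lemma fv_Conn: "fv1 (Conn S Vs n) = {}" "fv2 (Conn S Vs n) \<subseteq> {S} \<union> VV Vs"
  unfolding Conn_def by (auto simp: fv_Circ(1) dest: subsetD[OF fv_Circ(2)])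

lemma fv_Comp: "fv1 (Comp C S Vs n) = {}" "fv2 (Comp C S Vs n) \<subseteq> {C, S} \<union> VV Vs"
  unfolding Comp_def by (auto simp: fv_Circ(1) dest: subsetD[OF fv_Circ(2)])

lemma fv_Rank0: "fv1 (Rank0 S Vs n) = {}" "fv2 (Rank0 S Vs n) \<subseteq> {S} \<union> VV Vs"
  unfolding Rank0_def by (auto simp: fv_Dep(1) dest: subsetD[OF fv_Dep(2)])

lemma fv_body:
  assumes "\<And>X b. fv1 (stp X b) = {}" "\<And>X b. fv2 (stp X b) \<subseteq> {X} \<union> VV Vs"
  shows "fv1 (body stp S Vs n) = {}" "fv2 (body stp S Vs n) \<subseteq> {S} \<union> VV Vs"
  unfolding body_def using assms
  by (auto simp: fv_Rank0(1) fv_Conn(1) fv_Comp(1) dest: subsetD[OF fv_Rank0(2)] subsetD[OF fv_Conn(2)] subsetD[OF fv_Comp(2)] subsetD[OF assms(2)])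

lemma fv_Psi: "fv1 (Psi d S Vs n) = {} \<and> fv2 (Psi d S Vs n) \<subseteq> {S} \<union> VV Vs"
proof (induction d arbitrary: S Vs n)
  case 0
  show ?case using fv_body[of "\<lambda>_ _. cFF" Vs S n] by simp
next
  case (Suc d)
  let ?stp = "\<lambda>X b. ExV b (Conj (cAll1 b (cImp (RowP b) (Unique b (vmap b))))
      (Psi d X (Vs @ [vmap b]) (b + card (UNIV :: 'f set))))"
  have "fv1 (?stp X b) = {}" for X b using Suc.IH fv_ExV(1) fv_Unique(1) by auto
  moreover have "fv2 (?stp X b) \<subseteq> {X} \<union> VV Vs" for X b
  proof -
    have "fv2 (?stp X b) \<subseteq> (range (vmap b) \<union> ({X} \<union> VV (Vs @ [vmap b]))) - range (vmap b)"
      using fv_ExV(2)[of b] fv_Unique(2)[of b "vmap b"] Suc.IH[of X "Vs @ [vmap b]"] by fastforce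
    then show ?thesis unfolding VV_snoc by blast
  qed
  ultimately show ?case using fv_body[of ?stp Vs S n] by simp
qed

lemma sentence_top: "sentence (top d)"
  unfolding sentence_def top_def using fv_Psi[of d 0 "[]" 1] by (auto simp: VV_Nil)

end

theorem theorem10:
  fixes d :: nat
  shows "\<exists>\<phi> :: ('f::{field,finite}) cmso. sentence \<phi> \<and>
           (\<forall>A :: 'f mat. models A \<phi> \<longleftrightarrow> csd_matroid A \<le> d)"
proof -
  obtain p :: nat where p: "p > 0" "of_nat p = (0::'f)" using exists_char by blast
  obtain ix :: "'f \<Rightarrow> nat" where ix: "bij_betw ix UNIV {..<card (UNIV :: 'f set)}"
    using ex_bij_betw_finite_nat[of "UNIV :: 'f set"] by (auto simp: atLeast0LessThan)
  interpret fx p ix using p ix by unfold_locales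
  show ?thesis using sentence_top models_top by blast
qed

end
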